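(* Let $b \in \{2,3,4,\ldots\}$, let $c$ be a real root of an integer (i.e. $c^j \in \mathbb{Z}$ for some integer $j \geq 1$), and let $u>1$ be a real number such that there exist integers $h \geq 1$, $\ell$, a number $\hat c$, and four Laurent polynomials $p_1,p_2,p_3,p_4$ in a variable $x$ with integer coefficients and only finitely many nonzero coefficients, satisfying: \begin{enumerate} \item $p_1(u) = \sum_{k \in \mathbb Z} b_k u^k = 1/b$; \item $p_2(u) = \sum_{k \in \mathbb Z} c_k u^k = c$; \item $p_3(u) = \sum_{k=0,-1,\ldots,-h+1} d_k u^k = 0$ with $d_0=1$; \item $p_4(u) = \sum_{k \in \mathbb Z} e_k u^k = 0$ with $e_\ell > \sum_{k \neq \ell} |e_k|$. \end{enumerate} Assume furthermore that $\hat c > 3|e_\ell|$ and that for every Laurent polynomial $p = \sum_{k=-m}^{n} a_k x^k$ with integer coefficients satisfying $|a_k| \leq 3|e_\ell|$ for all $k$, the following algorithm $C$ satisfies the termination condition below. Algorithm $C$: set $k = n+h$ (with $a_{k'}=0$ for $k'>n$ and $k'<-m$); while $k > -m$ and $|a_{k'}| \leq \hat c$ for all $k' \in \{k,k-1,\ldots,k-h+1\}$, replace $p$ by $p - a_k \cdot p_3(x)\cdot x^k$ (updating the coefficients $a_{k'}$ of $p$ accordingly) and then set $k=k-1$. Termination condition: whenever $C$ stops at some $k > -m$ with some $|a_{k'}| > \hat c$ for some $k' \in \{k,\ldots,k-h+1\}$, then $$\Big|\sum_{k'=k,k-1,\ldots,k-h+1} u^{k'} a_{k'}\Big| > \frac{u^{k-h}}{1-u^{-1}}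 \cdot 3|e_\ell|.$$ Then, with $$S = \Big\{\sum_{k=-m}^{n} a_k u^k : m,n \in \mathbb N,\ a_k \in \mathbb Z,\ |a_k| < |e_\ell|\Big\}$$ (each element given as the word $k \mapsto a_k$ on $\{-m,\ldots,n\}$ and interpreted as the real number $\sum_k a_k u^k$), every member of $\mathbb{D}_b[c]$ is represented by some element of $S$, and the structure $(S,+,<,=;\cdot)$ has automatic addition and automatic comparisons $<,=$ and semiautomatic multiplication. Moreover, it is a dense subset of the reals and so forms a semiautomatic grid.
   Context: $\mathbb{D}_b = \{n/b^m : n,m \in \mathbb Z\}$ and $\mathbb{D}_b[c]$ is the subring of $\mathbb R$ generated by $\mathbb D_b$ and $c$. Words are functions from a finite subset (here an interval) of $\mathbb Z$ to a finite alphabet $\Sigma$. The convolution of words $w_1,\ldots,w_r$ is the word on $\bigcup_i dom(w_i)$ whose symbol at position $h$ is the tuple $(w_1'(h),\ldots,w_r'(h))$, where $w_i'(h)=w_i(h)$ if defined and $w_i'(h)=\#$ (a new padding symbol) otherwise. A relation $R$ on represented elements is automatic iff the set of convolutions of tuples of words whose represented values are in $R$ is regular (recognised by a finite automaton); a function $f$ is automatic iff the set of convolutions of $(x_1,\ldots,x_r,y)$ with $f(x_1,\ldots,x_r)=y$ (on represented values) is regular. A binary function such as multiplication is semiautomatic iff for every fixed value of one argument, the resulting unary function of the other argument is automatic. In the structure $(S,+,<,=;\cdot)$, the operations before the semicolon are required to be automatic and those after the semicolon only semiautomatic. A semiautomatic grid is such a semiautomatic ring $(A,+,=,<;\cdot)$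 whose elements represent real numbers forming a dense subring of $\mathbb R$. *)

theory Defs
  imports Complex_Main
begin

type_synonym 'b word = "int \<Rightarrow> 'b option"

definition wdom :: "'b word \<Rightarrow> int set" where
  "wdom w = {k. w k \<noteq> None}"

definition is_word :: "'b word \<Rightarrow> bool" where
  "is_word w \<longleftrightarrow> finite (wdom w)"

text \<open>Convolution of a list of words; the padding symbol # is None.\<close>
definition conv :: "'b word list \<Rightarrow> ('b option list) word" where
  "conv ws = (\<lambda>h. if (\<exists>w\<in>set ws. w h \<noteq> None) then Some (map (\<lambda>w. w h) ws) else None)"

text \<open>String encoding used to feed a word to a finite automaton: the positions from
  max(dom \<union> {0}) down to min(dom \<union> {0}), each symbol (None for undefined) tagged
  with a flag marking position 0.\<close>
definition wlo :: "'b word \<Rightarrow> int" where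
  "wlo w = Min (wdom w \<union> {0})"

definition whi :: "'b word \<Rightarrow> int" where
  "whi w = Max (wdom w \<union> {0})"

definition enc :: "'b word \<Rightarrow> ('b option \<times> bool) list" where
  "enc w = map (\<lambda>k. (w k, k = 0)) (rev [wlo w..whi w])"

definition regular_lang :: "'c list set \<Rightarrow> bool" where
  "regular_lang L \<longleftrightarrow> (\<exists>(Q::nat set) q0 (\<delta>::nat \<Rightarrow> 'c \<Rightarrow> nat) F.
      finite Q \<and> q0 \<in> Q \<and> (\<forall>q\<in>Q. \<forall>a. \<delta> q a \<in> Q) \<and> F \<subseteq> Q \<and>
      L = {xs. foldl \<delta> q0 xs \<in> F})"

definition regular_words :: "'b word set \<Rightarrow> bool" where
  "regular_words L \<longleftrightarrow> (\<forall>w\<in>L. is_word w) \<and> regular_lang (enc ` L)"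

definition automatic_relation ::
  "'b word set \<Rightarrow> ('b word \<Rightarrow> real) \<Rightarrow> nat \<Rightarrow> (real list \<Rightarrow> bool) \<Rightarrow> bool" where
  "automatic_relation S v r R \<longleftrightarrow>
     regular_words {conv ws | ws. length ws = r \<and> set ws \<subseteq> S \<and> R (map v ws)}"

definition automatic_function ::
  "'b word set \<Rightarrow> ('b word \<Rightarrow> real) \<Rightarrow> nat \<Rightarrow> (real list \<Rightarrow> real) \<Rightarrow> bool" where
  "automatic_function S v r f \<longleftrightarrow>
     automatic_relation S v (Suc r) (\<lambda>xs. f (take r xs) = xs ! r)"

definition semiautomatic_binop ::
  "'b word set \<Rightarrow> ('b word \<Rightarrow> real) \<Rightarrow> (real \<Rightarrow> real \<Rightarrow> real) \<Rightarrow> bool" where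
  "semiautomatic_binop S v f \<longleftrightarrow>
     (\<forall>a\<in>S. automatic_function S v 1 (\<lambda>xs. f (v a) (xs ! 0))) \<and>
     (\<forall>a\<in>S. automatic_function S v 1 (\<lambda>xs. f (xs ! 0) (v a)))"

definition real_subring :: "real set \<Rightarrow> bool" where
  "real_subring R \<longleftrightarrow> 1 \<in> R \<and> (\<forall>x\<in>R. -x \<in> R) \<and> (\<forall>x\<in>R. \<forall>y\<in>R. x + y \<in> R \<and> x * y \<in> R)"

definition dense_in_reals :: "real set \<Rightarrow> bool" where
  "dense_in_reals V \<longleftrightarrow> (\<forall>x y. x < y \<longrightarrow> (\<exists>z\<in>V. x < z \<and> z < y))"

definition semiautomatic_ring_structure :: "'b word set \<Rightarrow> ('b word \<Rightarrow> real) \<Rightarrow> bool" where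
  "semiautomatic_ring_structure S v \<longleftrightarrow>
     automatic_function S v 2 (\<lambda>xs. xs ! 0 + xs ! 1) \<and>
     automatic_relation S v 2 (\<lambda>xs. xs ! 0 < xs ! 1) \<and>
     automatic_relation S v 2 (\<lambda>xs. xs ! 0 = xs ! 1) \<and>
     semiautomatic_binop S v (*)"

definition semiautomatic_grid :: "'b word set \<Rightarrow> ('b word \<Rightarrow> real) \<Rightarrow> bool" where
  "semiautomatic_grid S v \<longleftrightarrow> semiautomatic_ring_structure S v \<and>
     real_subring (v ` S) \<and> dense_in_reals (v ` S)"

definition Dyadic :: "int \<Rightarrow> real set" where
  "Dyadic b = {of_int n / (of_int b) powi m | n m :: int. True}"

definition Dyadic_ext :: "int \<Rightarrow> real \<Rightarrow> real set" where
  "Dyadic_ext b c = \<Inter> {R. real_subring R \<and> Dyadic b \<subseteq> R \<and> c \<in> R}"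

definition laurent_poly :: "(int \<Rightarrow> int) \<Rightarrow> bool" where
  "laurent_poly p \<longleftrightarrow> finite {k. p k \<noteq> 0}"

definition lp_eval :: "(int \<Rightarrow> int) \<Rightarrow> real \<Rightarrow> real" where
  "lp_eval p u = (\<Sum>k\<in>{k. p k \<noteq> 0}. of_int (p k) * u powi k)"

definition val_u :: "real \<Rightarrow> int word \<Rightarrow> real" where
  "val_u u w = (\<Sum>k\<in>wdom w. of_int (the (w k)) * u powi k)"

definition digit_words :: "int \<Rightarrow> int word set" where
  "digit_words E = {w. \<exists>(m::nat) (n::nat) (a::int \<Rightarrow> int). (\<forall>k. \<bar>a k\<bar> < E) \<and>
       w = (\<lambda>k. if - int m \<le> k \<and> k \<le> int n then Some (a k) else None)}"

text \<open>State (a,k): coefficient function a, current index k. One loop iteration replaces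
  p by p - a_k * p3(x) * x^k and decrements k.\<close>
definition algC_step :: "(int \<Rightarrow> int) \<Rightarrow> (int \<Rightarrow> int) \<times> int \<Rightarrow> (int \<Rightarrow> int) \<times> int" where
  "algC_step d s = (let a = fst s; k = snd s in (\<lambda>k'. a k' - a k * d (k' - k), k - 1))"

definition algC_guard :: "real \<Rightarrow> int \<Rightarrow> int \<Rightarrow> (int \<Rightarrow> int) \<times> int \<Rightarrow> bool" where
  "algC_guard chat m h s \<longleftrightarrow> snd s > - m \<and>
     (\<forall>k'\<in>{snd s - h + 1 .. snd s}. of_int \<bar>fst s k'\<bar> \<le> chat)"

definition algC_condition :: "(int \<Rightarrow> int) \<Rightarrow> int \<Rightarrow> real \<Rightarrow> real \<Rightarrow> int \<Rightarrow> bool" where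
  "algC_condition d h chat u E \<longleftrightarrow>
    (\<forall>(m::int) (n::int) (a::int \<Rightarrow> int).
       (\<forall>k. (k < - m \<or> n < k) \<longrightarrow> a k = 0) \<and> (\<forall>k. \<bar>a k\<bar> \<le> 3 * E) \<longrightarrow>
       (\<forall>i::nat.
          let s = (algC_step d ^^ i) (a, n + h); a' = fst s; k = snd s in
          (\<forall>j<i. algC_guard chat m h ((algC_step d ^^ j) (a, n + h))) \<and>
          k > - m \<and> (\<exists>k'\<in>{k - h + 1 .. k}. chat < of_int \<bar>a' k'\<bar>) \<longrightarrow>
          \<bar>\<Sum>k'\<in>{k - h + 1 .. k}. u powi k' * of_int (a' k')\<bar>
             > u powi (k - h) / (1 - u powi (-1)) * (3 * of_int E)))"

end

theory Submission
  imports Defs "HOL-Library.FuncSet"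
begin

primrec car :: "real \<Rightarrow> (nat \<Rightarrow> real) \<Rightarrow> nat \<Rightarrow> real" where
  "car u d 0 = 0"
| "car u d (Suc n) = u * car u d n + d n"

lemma car_cong: "(\<And>i. i < n \<Longrightarrow> d i = d' i) \<Longrightarrow> car u d n = car u d' n"
  by (induction n) auto

lemma car_sum_fun: "car u (\<lambda>i. \<Sum>t\<in>T. f t i) n = (\<Sum>t\<in>T. car u (f t) n)"
  by (induction n) (auto simp: sum.distrib sum_distrib_left)

lemma car_scale: "car u (\<lambda>i. c * d i) n = c * car u d n"
  by (induction n) (auto simp: algebra_simps)

lemma car_add: "car u (\<lambda>i. d i + d' i) n = car u d n + car u d' n"
  by (induction n) (auto simp: algebra_simps)

lemma car_win:
  assumes "u \<noteq> 0"
  shows "(\<Sum>i<n. d i * u powi (- int i)) = u powi (1 - int n) * car u d n"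
proof (induction n)
  case 0 then show ?case by simp
next
  case (Suc n)
  have e: "u powi (1 - int (Suc n)) * u = u powi (1 - int n)"
  proof -
    have "u powi (1 - int n) = u powi ((1 - int (Suc n)) + 1)" by simp
    also have "\<dots> = u powi (1 - int (Suc n)) * u" using assms by (rule power_int_add_1[OF disjI1])
    finally show ?thesis by simp
  qed
  have e2: "u powi (1 - int (Suc n)) = u powi (- int n)" by simp
  show ?case using Suc
    by (simp add: algebra_simps e[symmetric] e2)
qed

lemma sum_int_ivl_nat:
  assumes "h \<ge> 1"
  shows "(\<Sum>k'\<in>{k - h + 1 .. k}. f k') = (\<Sum>j<nat h. f (k - int j))"
proof -
  have "bij_betw (\<lambda>j. k - int j) {..<nat h} {k - h + 1 .. k}"
  proof (rule bij_betwI')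
    show "\<And>x y. x \<in> {..<nat h} \<Longrightarrow> y \<in> {..<nat h} \<Longrightarrow> (k - int x = k - int y) = (x = y)" by auto
    show "\<And>x. x \<in> {..<nat h} \<Longrightarrow> k - int x \<in> {k - h + 1..k}" using assms by auto
    fix y assume "y \<in> {k - h + 1..k}"
    then show "\<exists>x\<in>{..<nat h}. y = k - int x"
      using assms by (intro bexI[of _ "nat (k - y)"]) auto
  qed
  then show ?thesis by (metis sum.reindex_bij_betw)
qed

lemma powi_mult_eq: "(u::real) \<noteq> 0 \<Longrightarrow> u powi a * u powi b = u powi (a + b)"
  by (simp add: power_int_add)

locale cfg =
  fixes u chat :: real and h E :: int and p3 :: "int \<Rightarrow> int"
  assumes u: "u > 1" and h: "h \<ge> 1" and E: "E \<ge> 0"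
    and p3_supp: "\<forall>k. (k < - h + 1 \<or> 0 < k) \<longrightarrow> p3 k = 0"
    and p3_0: "p3 0 = 1"
    and p3: "lp_eval p3 u = 0"
    and algC: "algC_condition p3 h chat u E"
begin

abbreviation "H \<equiv> nat h"

lemma u0: "u \<noteq> 0" using u by simp

lemma p3_sum: "(\<Sum>j<H. of_int (p3 (- int j)) * u powi (- int j)) = 0"
proof -
  have sub: "{k. p3 k \<noteq> 0} \<subseteq> (\<lambda>j. - int j) ` {..<H}"
  proof
    fix k assume "k \<in> {k. p3 k \<noteq> 0}"
    then have "- h + 1 \<le> k" "k \<le> 0" using p3_supp by (auto simp: not_less)
    then show "k \<in> (\<lambda>j. - int j) ` {..<H}"
      by (intro image_eqI[of _ _ "nat (-k)"]) auto
  qed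
  have "0 = (\<Sum>k\<in>{k. p3 k \<noteq> 0}. of_int (p3 k) * u powi k)" using p3 by (simp add: lp_eval_def)
  also have "\<dots> = (\<Sum>k\<in>(\<lambda>j. - int j) ` {..<H}. of_int (p3 k) * u powi k)"
    by (rule sum.mono_neutral_left) (use sub in auto)
  also have "\<dots> = (\<Sum>j<H. of_int (p3 (- int j)) * u powi (- int j))"
    by (subst sum.reindex) (auto simp: inj_on_def)
  finally show ?thesis by simp
qed

definition win :: "(int \<Rightarrow> int) \<times> int \<Rightarrow> real" where
  "win s = (\<Sum>j<H. u powi (snd s - int j) * of_int (fst s (snd s - int j)))"

lemma run_snd: "snd ((algC_step p3 ^^ i) (a, h)) = h - int i"
  by (induction i) (auto simp: algC_step_def Let_def)

lemma run_below: "\<forall>k'\<le> - int i. fst ((algC_step p3 ^^ i) (a, h)) k' = a k'"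
proof (induction i)
  case 0 then show ?case by simp
next
  case (Suc i)
  show ?case
  proof (intro allI impI)
    fix k' :: int assume k': "k' \<le> - int (Suc i)"
    have "p3 (k' - (h - int i)) = 0" using p3_supp k' by auto
    moreover obtain A k where s: "(algC_step p3 ^^ i) (a, h) = (A, k)" by (metis prod.collapse)
    moreover have "k = h - int i" using run_snd[of i a] s by simp
    moreover have "A k' = a k'" using Suc k' s by auto
    ultimately show "fst ((algC_step p3 ^^ Suc i) (a, h)) k' = a k'"
      by (simp add: algC_step_def Let_def)
  qed
qed

lemma run_win: "win ((algC_step p3 ^^ i) (a, h)) =
   win (a, h) + (\<Sum>i'<i. of_int (a (- int i')) * u powi (- int i'))"
proof (induction i)
  case 0 then show ?case by simp
next
  case (Suc i)
  define A where "A = fst ((algC_step p3 ^^ i) (a, h))"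
  define k where "k = h - int i"
  have s: "(algC_step p3 ^^ i) (a, h) = (A, k)"
    using run_snd[of i a] unfolding A_def k_def by (metis prod.collapse)
  have st: "(algC_step p3 ^^ Suc i) (a, h) = (\<lambda>k'. A k' - A k * p3 (k' - k), k - 1)"
    using s by (simp add: algC_step_def Let_def)
  define g where "g j = u powi (k - int j) * of_int (A (k - int j))" for j
  define q where "q j = u powi (- int j) * of_int (p3 (- int j))" for j
  have Hpos: "H \<ge> 1" using h by simp
  have gs: "(\<Sum>j<H. g (Suc j)) = (\<Sum>j<H. g j) + g H - g 0"
    using sum.lessThan_Suc_shift[of g H] sum.lessThan_Suc[of g H] by simp
  have qs: "(\<Sum>j<H. q (Suc j)) = (\<Sum>j<H. q j) + q H - q 0"
    using sum.lessThan_Suc_shift[of q H] sum.lessThan_Suc[of q H] by simp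
  have q0: "(\<Sum>j<H. q j) = 0" using p3_sum by (simp add: q_def mult.commute)
  have qH: "q H = 0" using p3_supp h by (simp add: q_def)
  have qz: "q 0 = 1" using p3_0 by (simp add: q_def)
  have gH: "g H = of_int (a (- int i)) * u powi (- int i)"
    using run_below[of i a] h by (simp add: g_def A_def k_def)
  have gz: "g 0 = u powi k * of_int (A k)" by (simp add: g_def)
  have w1: "win (A, k) = (\<Sum>j<H. g j)" by (simp add: win_def g_def)
  have pk: "u powi (k - 1 - int j) = u powi k * u powi (- int (Suc j))" for j
  proof -
    have "k - 1 - int j = k + (- int (Suc j))" by simp
    then show ?thesis using u0 by (simp only: power_int_add[OF disjI1[OF u0]])
  qed
  have trm: "u powi (k - 1 - int j) * of_int (A (k - 1 - int j) - A k * p3 (k - 1 - int j - k))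
      = g (Suc j) - of_int (A k) * u powi k * q (Suc j)" for j
  proof -
    have e1: "k - 1 - int j = k - int (Suc j)" by simp
    have e2: "k - int (Suc j) - k = - int (Suc j)" by simp
    have pk': "u powi (k - int (Suc j)) = u powi k * u powi (- int (Suc j))" using pk[of j] e1 by simp
    show ?thesis unfolding e1 e2 g_def q_def pk' by (simp add: algebra_simps)
  qed
  have "win (\<lambda>k'. A k' - A k * p3 (k' - k), k - 1) =
      (\<Sum>j<H. g (Suc j) - of_int (A k) * u powi k * q (Suc j))"
    unfolding win_def fst_conv snd_conv by (intro sum.cong refl) (rule trm)
  also have "\<dots> = (\<Sum>j<H. g (Suc j)) - of_int (A k) * u powi k * (\<Sum>j<H. q (Suc j))"
    by (simp add: sum_subtractf sum_distrib_left)
  also have "\<dots> = win (A, k) + of_int (a (- int i)) * u powi (- int i)"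
    unfolding gs qs q0 qH qz gH gz w1 by simp
  finally show ?case using Suc s st by simp
qed


definition "Kc = 3 * of_int E / (u - 1)"

definition Wset :: "real set" where
  "Wset = (\<lambda>w. \<Sum>j<H. of_int (w j) * u powi (h - 1 - int j)) ` (PiE {..<H} (\<lambda>_. {-\<lfloor>chat\<rfloor>..\<lfloor>chat\<rfloor>}))"

lemma finite_Wset: "finite Wset"
  unfolding Wset_def by (intro finite_imageI finite_PiE) auto

lemma fin_core:
  fixes z :: "nat \<Rightarrow> int" and n :: nat
  assumes zb: "\<forall>i<n. \<bar>z i\<bar> \<le> 3 * E"
    and cb: "\<forall>n'\<le>n. \<bar>car u (\<lambda>i. of_int (z i)) n'\<bar> \<le> Kc"
  shows "car u (\<lambda>i. of_int (z i)) n \<in> Wset"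
proof -
  define a where "a k = (if - int n < k \<and> k \<le> 0 then z (nat (-k)) else 0)" for k
  define m where "m = int n + h"
  define run where "run i = (algC_step p3 ^^ i) (a, h)" for i
  let ?c = "car u (\<lambda>i. of_int (z i))"
  have a0: "\<forall>k. (k < - m \<or> 0 < k) \<longrightarrow> a k = 0" unfolding a_def m_def using h by auto
  have ab: "\<forall>k. \<bar>a k\<bar> \<le> 3 * E" unfolding a_def using zb E by auto
  have AC: "\<And>i. (\<forall>j<i. algC_guard chat m h (run j)) \<Longrightarrow> snd (run i) > -m \<Longrightarrow>
      (\<exists>k'\<in>{snd (run i) - h + 1..snd (run i)}. chat < of_int \<bar>fst (run i) k'\<bar>) \<Longrightarrow>
      \<bar>\<Sum>k'\<in>{snd (run i) - h + 1..snd (run i)}. u powi k' * of_int (fst (run i) k')\<bar>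
         > u powi (snd (run i) - h) / (1 - u powi (-1)) * (3 * of_int E)"
    using algC[unfolded algC_condition_def, rule_format, of m 0 a] a0 ab unfolding run_def
    by (auto simp: Let_def)
  have win0: "win (a, h) = 0"
    unfolding win_def a_def using h by (auto intro!: sum.neutral)
  have winc: "win (run i) = u powi (1 - int i) * ?c i" if "i \<le> n" for i
  proof -
    have "win (run i) = (\<Sum>i'<i. of_int (a (- int i')) * u powi (- int i'))"
      unfolding run_def using run_win[of i a] win0 by simp
    also have "\<dots> = (\<Sum>i'<i. of_int (z i') * u powi (- int i'))"
      using that by (intro sum.cong) (auto simp: a_def)
    also have "\<dots> = u powi (1 - int i) * ?c i" by (rule car_win[OF u0])
    finally show ?thesis .
  qed
  have sumwin: "(\<Sum>k'\<in>{snd (run i) - h + 1..snd (run i)}. u powi k' * of_int (fst (run i) k')) = win (run i)" for i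
    unfolding win_def by (rule sum_int_ivl_nat[OF h])
  have thr: "u powi (snd (run i) - h) / (1 - u powi (-1)) * (3 * of_int E) = u powi (1 - int i) * Kc" for i
  proof -
    have sr: "snd (run i) - h = - int i" unfolding run_def using run_snd[of i a] by simp
    have pw: "u powi (1 - int i) = u powi (- int i) * u"
      using power_int_add[of u "- int i" 1] u0 by (simp add: algebra_simps)
    have d: "1 - u powi (-1) = (u - 1) / u" using u0 by (simp add: power_int_minus field_simps)
    have "u - 1 \<noteq> 0" using u by simp
    then show ?thesis unfolding sr pw d Kc_def using u0 by (simp add: field_simps)
  qed
  have guard: "\<forall>i\<le>n. algC_guard chat m h (run i)"
  proof (intro allI impI)
    fix i show "i \<le> n \<Longrightarrow> algC_guard chat m h (run i)"
    proof (induction i rule: less_induct)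
      case (less i)
      have hyp: "\<forall>j<i. algC_guard chat m h (run j)" using less by auto
      have sn: "snd (run i) > -m" unfolding run_def m_def using run_snd[of i a] less.prems h by simp
      show ?case
      proof (rule ccontr)
        assume "\<not> algC_guard chat m h (run i)"
        then obtain k' where "k'\<in>{snd (run i) - h + 1..snd (run i)}" "\<not> of_int \<bar>fst (run i) k'\<bar> \<le> chat"
          using sn unfolding algC_guard_def by auto
        then have "\<exists>k'\<in>{snd (run i) - h + 1..snd (run i)}. chat < of_int \<bar>fst (run i) k'\<bar>"
          by (auto simp: not_le)
        from AC[OF hyp sn this] have "\<bar>u powi (1 - int i) * ?c i\<bar> > u powi (1 - int i) * Kc"
          unfolding sumwin thr winc[OF less.prems] .
        moreover have "u powi (1 - int i) > 0" using u by simp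
        ultimately have "\<bar>?c i\<bar> > Kc" by (simp add: abs_mult)
        then show False using cb less.prems by force
      qed
    qed
  qed
  define A where "A = fst (run n)"
  have sn: "snd (run n) = h - int n" unfolding run_def by (rule run_snd)
  have Ab: "\<bar>A k'\<bar> \<le> \<lfloor>chat\<rfloor>" if "k' \<in> {h - int n - h + 1 .. h - int n}" for k'
    using guard that sn unfolding algC_guard_def A_def by (auto simp: le_floor_iff)
  define w where "w = restrict (\<lambda>j. A (h - int n - int j)) {..<H}"
  have wP: "w \<in> PiE {..<H} (\<lambda>_. {-\<lfloor>chat\<rfloor>..\<lfloor>chat\<rfloor>})"
  proof (rule PiE_I)
    fix j assume j: "j \<in> {..<H}"
    then have "h - int n - int j \<in> {h - int n - h + 1 .. h - int n}" using h by auto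
    from Ab[OF this] show "w j \<in> {-\<lfloor>chat\<rfloor>..\<lfloor>chat\<rfloor>}" using j unfolding w_def by (auto simp: abs_le_iff)
  next
    fix j assume "j \<notin> {..<H}" then show "w j = undefined" unfolding w_def by simp
  qed
  have "?c n = u powi (int n - 1) * win (run n)"
    using winc[of n] u0 by (simp add: power_int_minus[symmetric] power_int_add[symmetric])
  also have "\<dots> = (\<Sum>j<H. of_int (w j) * u powi (h - 1 - int j))"
    unfolding win_def sn sum_distrib_left w_def A_def[symmetric]
  proof (intro sum.cong refl)
    fix j assume "j \<in> {..<H}"
    have ex: "(int n - 1) + (h - int n - int j) = h - 1 - int j" by simp
    from powi_mult_eq[OF u0, of "int n - 1" "h - int n - int j"] have "u powi (int n - 1) * u powi (h - int n - int j) = u powi (h - 1 - int j)"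
      by (simp only: ex)
    then show "u powi (int n - 1) * (u powi (h - int n - int j) * of_int (A (h - int n - int j))) =
      of_int (restrict (\<lambda>j. A (h - int n - int j)) {..<H} j) * u powi (h - 1 - int j)"
      using \<open>j \<in> {..<H}\<close> by (simp add: algebra_simps)
  qed
  finally show ?thesis unfolding Wset_def using wP by blast
qed


end

lemma round_split:
  fixes x :: "nat \<Rightarrow> real" and N :: int
  assumes "(\<Sum>t<T. x t) = of_int N"
  shows "\<exists>y::nat \<Rightarrow> int. (\<Sum>t<T. y t) = N \<and> (\<forall>t<T. \<bar>of_int (y t) - x t\<bar> < 1)"
proof -
  define S where "S t = (\<Sum>s<t. x s)" for t
  define y where "y t = \<lfloor>S (Suc t)\<rfloor> - \<lfloor>S t\<rfloor>" for t
  have "(\<Sum>t<T. y t) = \<lfloor>S T\<rfloor> - \<lfloor>S 0\<rfloor>"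
    unfolding y_def by (rule sum_lessThan_telescope)
  also have "\<dots> = N" using assms by (simp add: S_def)
  finally have 1: "(\<Sum>t<T. y t) = N" .
  have 2: "\<bar>of_int (y t) - x t\<bar> < 1" for t
  proof -
    have "S (Suc t) = S t + x t" by (simp add: S_def)
    moreover have "of_int \<lfloor>S (Suc t)\<rfloor> \<le> S (Suc t)" "S (Suc t) < of_int \<lfloor>S (Suc t)\<rfloor> + 1"
      "of_int \<lfloor>S t\<rfloor> \<le> S t" "S t < of_int \<lfloor>S t\<rfloor> + 1" by linarith+
    ultimately show ?thesis unfolding y_def by (simp add: abs_less_iff) linarith
  qed
  show ?thesis using 1 2 by blast
qed

context cfg
begin

definition FinB :: "real \<Rightarrow> real set" where
  "FinB B = {car u (\<lambda>i. of_int (z i)) n | z n. \<forall>n'\<le>n. \<bar>car u (\<lambda>i. of_int (z i)) n'\<bar> \<le> B}"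

lemma finite_FinB:
  assumes uE: "u + 1 < 3 * of_int E" and B: "B \<ge> 0"
  shows "finite (FinB B)"
proof -
  have K1: "Kc > 1" unfolding Kc_def using u uE by (simp add: field_simps)
  define \<delta> where "\<delta> = min (Kc - 1) ((3 * of_int E - 1 - u) / (1 + u))"
  have dpos: "\<delta> > 0" unfolding \<delta>_def using K1 uE u by (simp add: field_simps)
  define T where "T = nat \<lceil>B / \<delta>\<rceil> + 1"
  have T1: "T \<ge> 1" unfolding T_def by simp
  have BT: "B / real T \<le> \<delta>"
  proof -
    have "B / \<delta> \<le> real T" unfolding T_def by linarith
    then have "B \<le> \<delta> * real T" using dpos by (simp add: field_simps)
    then show ?thesis using T1 by (simp add: field_simps)
  qed
  have BT1: "B / real T \<le> Kc - 1" using BT unfolding \<delta>_def by simp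
  have BT2: "(1 + u) * (B / real T) \<le> 3 * of_int E - 1 - u"
  proof -
    have "B / real T \<le> (3 * of_int E - 1 - u) / (1 + u)" using BT unfolding \<delta>_def by simp
    then show ?thesis using u by (simp add: field_simps)
  qed
  have Tpos: "real T > 0" using T1 by simp
  let ?c = "\<lambda>z n. car u (\<lambda>i. of_int (z i)) n"
  have split: "\<exists>Z::nat \<Rightarrow> nat \<Rightarrow> int. (\<forall>i<n. (\<Sum>t<T. Z t i) = z i) \<and> (\<forall>t<T. \<forall>i<n. \<bar>Z t i\<bar> \<le> 3 * E)
     \<and> (\<forall>t<T. \<forall>n'\<le>n. \<bar>?c (Z t) n' - ?c z n' / real T\<bar> < 1)"
    if zb: "\<forall>n'\<le>n. \<bar>?c z n'\<bar> \<le> B" for z n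
    using zb
  proof (induction n)
    case 0 show ?case by (intro exI[of _ "\<lambda>_ _. 0"]) simp
  next
    case (Suc n)
    then obtain Z where Z1: "\<forall>i<n. (\<Sum>t<T. Z t i) = z i" and Z2: "\<forall>t<T. \<forall>i<n. \<bar>Z t i\<bar> \<le> 3 * E"
      and Z3: "\<forall>t<T. \<forall>n'\<le>n. \<bar>?c (Z t) n' - ?c z n' / real T\<bar> < 1" by auto
    define P where "P = ?c z n"
    define P' where "P' = ?c z (Suc n)"
    have PP: "P' = u * P + of_int (z n)" unfolding P_def P'_def by simp
    have Pb: "\<bar>P\<bar> \<le> B" "\<bar>P'\<bar> \<le> B" using Suc.prems unfolding P_def P'_def by auto
    have sumP: "(\<Sum>t<T. ?c (Z t) n) = P"
    proof -
      have "(\<Sum>t<T. ?c (Z t) n) = car u (\<lambda>i. \<Sum>t<T. of_int (Z t i)) n"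
        by (rule car_sum_fun[symmetric])
      also have "\<dots> = P" unfolding P_def by (rule car_cong) (metis Z1 of_int_sum)
      finally show ?thesis .
    qed
    define x where "x t = P' / real T - u * ?c (Z t) n" for t
    have "(\<Sum>t<T. x t) = P' - u * P" unfolding x_def using Tpos
      by (simp add: sum_subtractf sum_distrib_left[symmetric] sumP)
    also have "\<dots> = of_int (z n)" using PP by simp
    finally obtain y where y1: "(\<Sum>t<T. y t) = z n" and y2: "\<forall>t<T. \<bar>of_int (y t) - x t\<bar> < 1"
      using round_split by blast
    define Z' where "Z' t = (Z t)(n := y t)" for t
    have cZ': "?c (Z' t) n' = ?c (Z t) n'" if "n' \<le> n" for t n'
      by (rule car_cong) (use that in \<open>auto simp: Z'_def\<close>)
    show ?case
    proof (intro exI[of _ Z'] conjI allI impI)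
      fix i assume "i < Suc n"
      then show "(\<Sum>t<T. Z' t i) = z i" using Z1 y1 by (cases "i = n") (auto simp: Z'_def)
    next
      fix t i assume t: "t < T" and i: "i < Suc n"
      show "\<bar>Z' t i\<bar> \<le> 3 * E"
      proof (cases "i = n")
        case False then show ?thesis using Z2 t i by (auto simp: Z'_def)
      next
        case True
        have pt: "\<bar>?c (Z t) n\<bar> \<le> B / real T + 1"
        proof -
          have "\<bar>?c (Z t) n - P / real T\<bar> < 1" using Z3 t unfolding P_def by auto
          moreover have "\<bar>P / real T\<bar> \<le> B / real T" using Pb Tpos by (simp add: divide_right_mono)
          ultimately show ?thesis by linarith
        qed
        have "\<bar>x t\<bar> \<le> B / real T + u * (B / real T + 1)"
        proof -
          have "\<bar>P' / real T\<bar> \<le> B / real T" using Pb Tpos by (simp add: divide_right_mono)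
          moreover have "\<bar>u * ?c (Z t) n\<bar> \<le> u * (B / real T + 1)"
            using pt u by (simp add: abs_mult)
          ultimately show ?thesis unfolding x_def by linarith
        qed
        moreover have "\<bar>of_int (y t) - x t\<bar> < 1" using y2 t by auto
        ultimately have "\<bar>of_int (y t)\<bar> < 1 + B / real T + u * (B / real T + 1)" by linarith
        also have "\<dots> = 1 + u + (1 + u) * (B / real T)" by (simp add: algebra_simps add_divide_distrib)
        also have "\<dots> \<le> 3 * of_int E" using BT2 by linarith
        finally have "\<bar>y t\<bar> \<le> 3 * E" by linarith
        then show ?thesis using True by (simp add: Z'_def)
      qed
    next
      fix t n' assume t: "t < T" and n': "n' \<le> Suc n"
      show "\<bar>?c (Z' t) n' - ?c z n' / real T\<bar> < 1"
      proof (cases "n' = Suc n")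
        case False then show ?thesis using Z3 t n' cZ' by auto
      next
        case True
        have "?c (Z' t) (Suc n) = u * ?c (Z t) n + of_int (y t)"
          using cZ'[of n t] by (simp add: Z'_def)
        then have "?c (Z' t) n' - ?c z n' / real T = of_int (y t) - x t"
          using True unfolding x_def P'_def by simp
        then show ?thesis using y2 t by simp
      qed
    qed
  qed
  define Sums where "Sums = (\<lambda>f. \<Sum>t<T. f t) ` (PiE {..<T} (\<lambda>_. Wset))"
  have "finite Sums" unfolding Sums_def using finite_Wset by (intro finite_imageI finite_PiE) auto
  moreover have "FinB B \<subseteq> Sums"
  proof
    fix p assume "p \<in> FinB B"
    then obtain z n where p: "p = ?c z n" and zb: "\<forall>n'\<le>n. \<bar>?c z n'\<bar> \<le> B"
      unfolding FinB_def by auto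
    obtain Z where Z1: "\<forall>i<n. (\<Sum>t<T. Z t i) = z i" and Z2: "\<forall>t<T. \<forall>i<n. \<bar>Z t i\<bar> \<le> 3 * E"
      and Z3: "\<forall>t<T. \<forall>n'\<le>n. \<bar>?c (Z t) n' - ?c z n' / real T\<bar> < 1"
      using split[OF zb] by blast
    have inW: "?c (Z t) n \<in> Wset" if t: "t < T" for t
    proof (rule fin_core)
      show "\<forall>i<n. \<bar>Z t i\<bar> \<le> 3 * E" using Z2 t by auto
      show "\<forall>n'\<le>n. \<bar>?c (Z t) n'\<bar> \<le> Kc"
      proof (intro allI impI)
        fix n' assume n': "n' \<le> n"
        have "\<bar>?c (Z t) n' - ?c z n' / real T\<bar> < 1" using Z3 t n' by auto
        moreover have "\<bar>?c z n' / real T\<bar> \<le> B / real T" using zb n' Tpos by (simp add: divide_right_mono)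
        ultimately show "\<bar>?c (Z t) n'\<bar> \<le> Kc" using BT1 by linarith
      qed
    qed
    have "p = (\<Sum>t<T. ?c (Z t) n)"
    proof -
      have "(\<Sum>t<T. ?c (Z t) n) = car u (\<lambda>i. \<Sum>t<T. of_int (Z t i)) n"
        by (rule car_sum_fun[symmetric])
      also have "\<dots> = p" unfolding p by (rule car_cong) (metis Z1 of_int_sum)
      finally show ?thesis by simp
    qed
    moreover have "restrict (\<lambda>t. ?c (Z t) n) {..<T} \<in> PiE {..<T} (\<lambda>_. Wset)" using inW by auto
    moreover have "(\<Sum>t<T. restrict (\<lambda>t. ?c (Z t) n) {..<T} t) = (\<Sum>t<T. ?c (Z t) n)" by simp
    ultimately show "p \<in> Sums" unfolding Sums_def by (metis image_eqI)
  qed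
  ultimately show ?thesis by (rule finite_subset[rotated])
qed


end

primrec dl :: "(nat \<Rightarrow> nat \<Rightarrow> int) \<Rightarrow> nat \<Rightarrow> nat \<Rightarrow> int" where
  "dl c 0 e = 0"
| "dl c (Suc n) e = (if e = 0 then 0 else dl c n (e - 1)) + c n e"

lemma dl_bound: "(\<forall>i j. \<bar>c i j\<bar> \<le> M) \<Longrightarrow> \<bar>dl c n e\<bar> \<le> int (Suc e) * M"
proof (induction n arbitrary: e)
  case 0 then show ?case by (cases "M \<ge> 0") (auto, smt (verit) abs_ge_zero)
next
  case (Suc n)
  have cM: "\<bar>c n e\<bar> \<le> M" using Suc.prems by auto
  show ?case
  proof (cases e)
    case 0 then show ?thesis using cM by simp
  next
    case (Suc e')
    have "\<bar>dl c n e'\<bar> \<le> int (Suc e') * M" using Suc.IH Suc.prems by auto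
    then show ?thesis using cM Suc by (simp add: algebra_simps)
  qed
qed

lemma car_poly:
  fixes c :: "nat \<Rightarrow> nat \<Rightarrow> int" and u :: real and T :: nat
  defines "d \<equiv> \<lambda>i. \<Sum>j\<le>Suc T. of_int (c i j) * u ^ j"
  defines "z \<equiv> \<lambda>n. dl c n T + c n (Suc T)"
  shows "car u d n = u ^ Suc T * car u (\<lambda>i. of_int (z i)) n + (\<Sum>e\<le>T. of_int (dl c n e) * u ^ e)"
proof (induction n)
  case 0 then show ?case by simp
next
  case (Suc n)
  have A: "(\<Sum>e\<le>T. of_int (dl c (Suc n) e) * u ^ e) =
     (\<Sum>e\<le>T. of_int (c n e) * u ^ e) + (\<Sum>e<T. of_int (dl c n e) * u ^ Suc e)"
  proof -
    have "(\<Sum>e\<le>T. of_int (dl c (Suc n) e) * u ^ e) =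
      (\<Sum>e\<le>T. of_int (c n e) * u ^ e) + (\<Sum>e\<le>T. of_int (if e = 0 then 0 else dl c n (e - 1)) * u ^ e)"
      by (simp add: sum.distrib[symmetric] algebra_simps)
    also have "(\<Sum>e\<le>T. of_int (if e = 0 then 0 else dl c n (e - 1)) * u ^ e) = (\<Sum>e<T. of_int (dl c n e) * u ^ Suc e)"
      by (subst sum.atMost_shift) simp
    finally show ?thesis .
  qed
  have B: "u * (\<Sum>e\<le>T. of_int (dl c n e) * u ^ e) = (\<Sum>e<T. of_int (dl c n e) * u ^ Suc e) + of_int (dl c n T) * u ^ Suc T"
    by (simp add: sum_distrib_left lessThan_Suc_atMost[symmetric] algebra_simps)
  have C: "d n = (\<Sum>e\<le>T. of_int (c n e) * u ^ e) + of_int (c n (Suc T)) * u ^ Suc T"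
    unfolding d_def by simp
  define X where "X = car u (\<lambda>i. of_int (z i)) n"
  define S1 where "S1 = (\<Sum>e\<le>T. of_int (dl c n e) * u ^ e)"
  define S2 where "S2 = (\<Sum>e<T. of_int (dl c n e) * u ^ Suc e)"
  define S3 where "S3 = (\<Sum>e\<le>T. of_int (c n e) * u ^ e)"
  have IH: "car u d n = u ^ Suc T * X + S1" using Suc.IH unfolding X_def S1_def .
  have A': "(\<Sum>e\<le>T. of_int (dl c (Suc n) e) * u ^ e) = S3 + S2" using A unfolding S2_def S3_def .
  have B': "u * S1 = S2 + of_int (dl c n T) * u ^ Suc T" using B unfolding S1_def S2_def .
  have C': "d n = S3 + of_int (c n (Suc T)) * u ^ Suc T" using C unfolding S3_def .
  have Z: "car u (\<lambda>i. of_int (z i)) (Suc n) = u * X + (of_int (dl c n T) + of_int (c n (Suc T)))"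
    by (simp add: X_def z_def)
  have "car u d (Suc n) = u * (u ^ Suc T * X + S1) + d n" using IH by simp
  also have "\<dots> = u ^ Suc T * (u * X) + (u * S1) + d n" by (simp add: algebra_simps)
  also have "\<dots> = u ^ Suc T * (u * X) + (S2 + of_int (dl c n T) * u ^ Suc T) + (S3 + of_int (c n (Suc T)) * u ^ Suc T)"
    unfolding B' C' ..
  also have "\<dots> = u ^ Suc T * car u (\<lambda>i. of_int (z i)) (Suc n) + (S3 + S2)"
    unfolding Z by (simp add: algebra_simps)
  finally show ?case unfolding A' .
qed

context cfg
begin

definition dP :: "nat \<Rightarrow> (nat \<Rightarrow> nat \<Rightarrow> int) \<Rightarrow> nat \<Rightarrow> real" where
  "dP T c i = (\<Sum>j\<le>Suc T. of_int (c i j) * u ^ j)"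

lemma finite_FinP:
  assumes uE: "u + 1 < 3 * of_int E" and B: "B \<ge> 0"
  shows "finite {car u (dP T c) n | c n. (\<forall>i j. \<bar>c i j\<bar> \<le> M) \<and> (\<forall>n'\<le>n. \<bar>car u (dP T c) n'\<bar> \<le> B)}"
proof -
  define DS where "DS = (\<lambda>\<delta>. \<Sum>e\<le>T. of_int (\<delta> e) * u ^ e) ` PiE {..T} (\<lambda>_. {-(int (Suc T) * M)..int (Suc T) * M})"
  have fDS: "finite DS" unfolding DS_def by (intro finite_imageI finite_PiE) auto
  define BD where "BD = Max (insert 0 (abs ` DS))"
  have BD: "\<bar>x\<bar> \<le> BD" if "x \<in> DS" for x unfolding BD_def using fDS that by (intro Max_ge) auto
  have BD0: "BD \<ge> 0" unfolding BD_def using fDS by (intro Max_ge) auto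
  let ?S = "{car u (dP T c) n | c n. (\<forall>i j. \<bar>c i j\<bar> \<le> M) \<and> (\<forall>n'\<le>n. \<bar>car u (dP T c) n'\<bar> \<le> B)}"
  define Bz where "Bz = B + BD"
  have "?S \<subseteq> (\<lambda>(x, y). u ^ Suc T * x + y) ` (FinB Bz \<times> DS)"
  proof
    fix p assume "p \<in> ?S"
    then obtain c n where cM: "\<forall>i j. \<bar>c i j\<bar> \<le> M" and cb: "\<forall>n'\<le>n. \<bar>car u (dP T c) n'\<bar> \<le> B"
      and p: "p = car u (dP T c) n" by auto
    define z where "z = (\<lambda>n. dl c n T + c n (Suc T))"
    have eq: "car u (dP T c) n' = u ^ Suc T * car u (\<lambda>i. of_int (z i)) n' + (\<Sum>e\<le>T. of_int (dl c n' e) * u ^ e)" for n'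
      unfolding dP_def z_def by (rule car_poly)
    have inDS: "(\<Sum>e\<le>T. of_int (dl c n' e) * u ^ e) \<in> DS" for n'
    proof -
      have "restrict (dl c n') {..T} \<in> PiE {..T} (\<lambda>_. {-(int (Suc T) * M)..int (Suc T) * M})"
      proof (rule PiE_I)
        fix e assume e: "e \<in> {..T}"
        have "\<bar>dl c n' e\<bar> \<le> int (Suc e) * M" by (rule dl_bound[OF cM])
        moreover have "int (Suc e) * M \<le> int (Suc T) * M"
        proof (cases "M \<ge> 0")
          case True then show ?thesis using e by (intro mult_right_mono) auto
        next
          case False then have "\<bar>c 0 0\<bar> \<le> M" using cM by auto
          then show ?thesis using False by simp
        qed
        ultimately show "restrict (dl c n') {..T} e \<in> {-(int (Suc T) * M)..int (Suc T) * M}" using e by auto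
      qed auto
      then show ?thesis unfolding DS_def
        by (rule image_eqI[rotated]) (simp add: atMost_iff)
    qed
    have "car u (\<lambda>i. of_int (z i)) n \<in> FinB Bz" unfolding FinB_def
    proof (intro CollectI exI conjI allI impI)
      show "car u (\<lambda>i. of_int (z i)) n = car u (\<lambda>i. of_int (z i)) n" ..
      fix n' assume n': "n' \<le> n"
      have "\<bar>u ^ Suc T * car u (\<lambda>i. of_int (z i)) n'\<bar> \<le> B + BD"
        using eq[of n'] cb n' BD[OF inDS[of n']] by (smt (verit))
      moreover have "\<bar>car u (\<lambda>i. of_int (z i)) n'\<bar> \<le> \<bar>u ^ Suc T * car u (\<lambda>i. of_int (z i)) n'\<bar>"
      proof -
        have "1 \<le> u ^ Suc T" using u by (intro one_le_power) simp
        then have "1 * \<bar>car u (\<lambda>i. of_int (z i)) n'\<bar> \<le> u ^ Suc T * \<bar>car u (\<lambda>i. of_int (z i)) n'\<bar>"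
          by (intro mult_right_mono) auto
        moreover have "\<bar>u ^ Suc T * car u (\<lambda>i. of_int (z i)) n'\<bar> = u ^ Suc T * \<bar>car u (\<lambda>i. of_int (z i)) n'\<bar>"
          using u by (simp add: abs_mult)
        ultimately show ?thesis by simp
      qed
      ultimately show "\<bar>car u (\<lambda>i. of_int (z i)) n'\<bar> \<le> Bz" unfolding Bz_def by linarith
    qed
    then show "p \<in> (\<lambda>(x, y). u ^ Suc T * x + y) ` (FinB Bz \<times> DS)"
      using p eq[of n] inDS[of n] by force
  qed
  moreover have "finite (FinB Bz)" using finite_FinB[OF uE] B BD0 unfolding Bz_def by simp
  ultimately show ?thesis using fDS by (rule finite_subset[OF _ finite_imageI[OF finite_cartesian_product]])
qed


definition FinR :: "real set \<Rightarrow> real \<Rightarrow> real set" where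
  "FinR D B = {car u d n | d n. (\<forall>i<n. d i \<in> D) \<and> (\<forall>n'\<le>n. \<bar>car u d n'\<bar> \<le> B)}"

lemma finite_FinR:
  assumes uE: "u + 1 < 3 * of_int E" and B: "B \<ge> 0" and D: "finite D"
    and form: "\<forall>d\<in>D. \<exists>c::nat \<Rightarrow> int. d = u powi (- int s) * (\<Sum>j\<le>Suc T. of_int (c j) * u ^ j)"
  shows "finite (FinR D B)"
proof -
  define cf where "cf d = (SOME c::nat \<Rightarrow> int. d = u powi (- int s) * (\<Sum>j\<le>Suc T. of_int (c j) * u ^ j))" for d
  have cf: "d = u powi (- int s) * (\<Sum>j\<le>Suc T. of_int (cf d j) * u ^ j)" if "d \<in> D" for d
  proof -
    have "\<exists>c::nat \<Rightarrow> int. d = u powi (- int s) * (\<Sum>j\<le>Suc T. of_int (c j) * u ^ j)" using form that by blast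
    then show ?thesis unfolding cf_def by (rule someI_ex)
  qed
  define M where "M = Max (insert 0 ((\<lambda>(d, j). \<bar>cf d j\<bar>) ` (D \<times> {..Suc T})))"
  have fM: "finite (insert 0 ((\<lambda>(d, j). \<bar>cf d j\<bar>) ` (D \<times> {..Suc T})))" using D by simp
  have M: "\<bar>cf d j\<bar> \<le> M" if "d \<in> D" "j \<le> Suc T" for d j
    unfolding M_def using that by (intro Max_ge[OF fM]) force
  have M0: "0 \<le> M" unfolding M_def by (intro Max_ge[OF fM]) simp
  have us: "u ^ s > 0" using u by simp
  let ?P = "{car u (dP T c) n | c n. (\<forall>i j. \<bar>c i j\<bar> \<le> M) \<and> (\<forall>n'\<le>n. \<bar>car u (dP T c) n'\<bar> \<le> u ^ s * B)}"
  have fP: "finite ?P" by (rule finite_FinP[OF uE]) (use B us in simp)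
  have "FinR D B \<subseteq> (\<lambda>x. x / u ^ s) ` ?P"
  proof
    fix p assume "p \<in> FinR D B"
    then obtain d n where dD: "\<forall>i<n. d i \<in> D" and db: "\<forall>n'\<le>n. \<bar>car u d n'\<bar> \<le> B" and p: "p = car u d n"
      unfolding FinR_def by auto
    define c where "c i j = (if i < n \<and> j \<le> Suc T then cf (d i) j else 0)" for i j
    have cM: "\<forall>i j. \<bar>c i j\<bar> \<le> M" unfolding c_def using M dD M0 by auto
    have dPe: "dP T c i = u ^ s * d i" if "i < n" for i
    proof -
      have "d i = u powi (- int s) * (\<Sum>j\<le>Suc T. of_int (cf (d i) j) * u ^ j)" using cf dD that by auto
      then have "u ^ s * d i = (\<Sum>j\<le>Suc T. of_int (cf (d i) j) * u ^ j)"
        using u0 by (simp add: power_int_minus field_simps)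
      also have "\<dots> = dP T c i" unfolding dP_def c_def using that by (intro sum.cong) auto
      finally show ?thesis by simp
    qed
    have ce: "car u (dP T c) n' = u ^ s * car u d n'" if "n' \<le> n" for n'
    proof -
      have "car u (dP T c) n' = car u (\<lambda>i. u ^ s * d i) n'" by (rule car_cong) (use dPe that in auto)
      then show ?thesis by (simp add: car_scale)
    qed
    have "u ^ s * p \<in> ?P"
    proof (intro CollectI exI conjI)
      show "u ^ s * p = car u (dP T c) n" using ce p by simp
      show "\<forall>i j. \<bar>c i j\<bar> \<le> M" by (rule cM)
      show "\<forall>n'\<le>n. \<bar>car u (dP T c) n'\<bar> \<le> u ^ s * B"
        using ce db us by (auto simp: abs_mult)
    qed
    moreover have "p = (u ^ s * p) / u ^ s"
      by (rule nonzero_mult_div_cancel_left[symmetric]) (use us in \<open>rule less_imp_neq[symmetric]\<close>)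
    ultimately show "p \<in> (\<lambda>x. x / u ^ s) ` ?P" by blast
  qed
  then show ?thesis by (rule finite_subset[OF _ finite_imageI[OF fP]])
qed

end

lemma regular_dfa:
  fixes \<delta> :: "'q \<Rightarrow> 'c \<Rightarrow> 'q"
  assumes fin: "finite {foldl \<delta> q0 xs | xs. True}" and L: "L = {xs. foldl \<delta> q0 xs \<in> F}"
  shows "regular_lang L"
proof -
  define R where "R = {foldl \<delta> q0 xs | xs. True}"
  obtain n :: nat and f where Rf: "R = f ` {i. i < n}" and inj: "inj_on f {i. i < n}"
    using finite_imp_nat_seg_image_inj_on[OF fin[folded R_def]] by auto
  define \<iota> where "\<iota> = the_inv_into {i. i < n} f"
  have fi: "f (\<iota> r) = r" if "r \<in> R" for r
    unfolding \<iota>_def using that Rf inj by (simp add: f_the_inv_into_f)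
  have iQ: "\<iota> r \<in> {i. i < n}" if "r \<in> R" for r
    unfolding \<iota>_def using that Rf inj by (metis the_inv_into_into subset_refl)
  have inR: "foldl \<delta> q0 xs \<in> R" for xs unfolding R_def by blast
  define \<delta>' where "\<delta>' i c = \<iota> (\<delta> (f i) c)" for i c
  define F' where "F' = {i. i < n \<and> f i \<in> F}"
  have run: "foldl \<delta>' (\<iota> q0) xs = \<iota> (foldl \<delta> q0 xs)" for xs
  proof (induction xs rule: rev_induct)
    case Nil then show ?case by simp
  next
    case (snoc x xs)
    show ?case using snoc fi[OF inR[of xs]] by (simp add: \<delta>'_def)
  qed
  show ?thesis unfolding regular_lang_def
  proof (intro exI conjI)
    show "finite {i. i < n}" by simp
    show "\<iota> q0 \<in> {i. i < n}" using iQ[OF inR[of "[]"]] by simp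
    show "\<forall>q\<in>{i. i < n}. \<forall>a. \<delta>' q a \<in> {i. i < n}"
    proof (intro ballI allI)
      fix q a assume q: "q \<in> {i. i < n}"
      then have "f q \<in> R" using Rf by auto
      then obtain xs where "f q = foldl \<delta> q0 xs" unfolding R_def by auto
      then have "\<delta> (f q) a = foldl \<delta> q0 (xs @ [a])" by simp
      then show "\<delta>' q a \<in> {i. i < n}" unfolding \<delta>'_def using iQ inR by metis
    qed
    show "F' \<subseteq> {i. i < n}" unfolding F'_def by auto
    show "L = {xs. foldl \<delta>' (\<iota> q0) xs \<in> F'}"
      unfolding L run F'_def using iQ[OF inR] fi[OF inR] by auto
  qed
qed

lemma foldl_pair: "foldl (\<lambda>(a, b) c. (f a c, g b c)) (a0, b0) xs = (foldl f a0 xs, foldl g b0 xs)"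
  by (induction xs arbitrary: a0 b0) auto

lemma regular_product:
  fixes f :: "'a \<Rightarrow> 'c \<Rightarrow> 'a" and g :: "'b \<Rightarrow> 'c \<Rightarrow> 'b"
  assumes "finite {foldl f a0 xs | xs. True}" "finite {foldl g b0 xs | xs. True}"
  shows "regular_lang {xs. foldl f a0 xs \<in> F1 \<and> foldl g b0 xs \<in> F2}"
proof (rule regular_dfa)
  show "finite {foldl (\<lambda>(a, b) c. (f a c, g b c)) (a0, b0) xs | xs. True}"
    by (rule finite_subset[OF _ finite_cartesian_product[OF assms]]) (auto simp: foldl_pair)
  show "{xs. foldl f a0 xs \<in> F1 \<and> foldl g b0 xs \<in> F2} =
    {xs. foldl (\<lambda>(a, b) c. (f a c, g b c)) (a0, b0) xs \<in> F1 \<times> F2}"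
    by (auto simp: foldl_pair)
qed

definition lcar :: "real \<Rightarrow> ('c \<Rightarrow> real) \<Rightarrow> 'c list \<Rightarrow> real" where
  "lcar u g xs = foldl (\<lambda>P c. u * P + g c) 0 xs"

lemma lcar_snoc: "lcar u g (xs @ [c]) = u * lcar u g xs + g c"
  by (simp add: lcar_def)

lemma lcar_Nil: "lcar u g [] = 0" by (simp add: lcar_def)

lemma lcar_car: "k \<le> length xs \<Longrightarrow> car u (\<lambda>i. g (xs ! i)) k = lcar u g (take k xs)"
proof (induction k)
  case 0 then show ?case by (simp add: lcar_def)
next
  case (Suc k)
  have "take (Suc k) xs = take k xs @ [xs ! k]" using Suc.prems by (simp add: take_Suc_conv_app_nth)
  then show ?case using Suc by (simp add: lcar_snoc)
qed

lemma lcar_sum: "lcar u (\<lambda>c. \<Sum>i\<in>I. f i c) xs = (\<Sum>i\<in>I. lcar u (f i) xs)"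
  by (induction xs rule: rev_induct) (auto simp: lcar_snoc lcar_Nil sum.distrib sum_distrib_left)

lemma lcar_scale: "lcar u (\<lambda>c. a * f c) xs = a * lcar u f xs"
  by (induction xs rule: rev_induct) (auto simp: lcar_snoc lcar_Nil algebra_simps)

lemma lcar_closed: "lcar u g xs = (\<Sum>j<length xs. g (xs ! j) * u ^ (length xs - 1 - j))"
proof (induction xs rule: rev_induct)
  case Nil then show ?case by (simp add: lcar_Nil)
next
  case (snoc x xs)
  have "(\<Sum>j<length (xs @ [x]). g ((xs @ [x]) ! j) * u ^ (length (xs @ [x]) - 1 - j)) =
     (\<Sum>j<length xs. g (xs ! j) * u ^ (length xs - j)) + g x"
    by (simp add: nth_append)
  also have "(\<Sum>j<length xs. g (xs ! j) * u ^ (length xs - j)) = u * (\<Sum>j<length xs. g (xs ! j) * u ^ (length xs - 1 - j))"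
    by (simp add: sum_distrib_left algebra_simps) (intro sum.cong refl, simp add: Suc_diff_Suc power_Suc[symmetric])
  finally show ?case using snoc by (simp add: lcar_snoc)
qed

context cfg
begin

definition \<delta>A :: "real \<Rightarrow> ('c \<Rightarrow> real) \<Rightarrow> real + bool \<Rightarrow> 'c \<Rightarrow> real + bool" where
  "\<delta>A B g s c = (case s of Inl P \<Rightarrow> (if \<bar>u * P + g c\<bar> \<le> B then Inl (u * P + g c) else Inr (u * P + g c > 0))
     | Inr b \<Rightarrow> Inr b)"

lemma \<delta>A_inv:
  assumes gM: "\<forall>c. \<bar>g c\<bar> \<le> Mg" and BM: "Mg \<le> (u - 1) * B" and B0: "0 \<le> B"
  shows "(case foldl (\<delta>A B g) (Inl 0) xs of
      Inl P \<Rightarrow> P = lcar u g xs \<and> (\<forall>k\<le>length xs. \<bar>lcar u g (take k xs)\<bar> \<le> B)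
    | Inr b \<Rightarrow> (if b then lcar u g xs > B else lcar u g xs < - B))"
proof (induction xs rule: rev_induct)
  case Nil then show ?case using B0 by (simp add: lcar_Nil)
next
  case (snoc x xs)
  have g1: "\<bar>g x\<bar> \<le> Mg" using gM by blast
  have gx: "- Mg \<le> g x" "g x \<le> Mg" using g1 unfolding abs_le_iff by linarith+
  show ?case
  proof (cases "foldl (\<delta>A B g) (Inl 0) xs")
    case (Inl P)
    with snoc have P: "P = lcar u g xs" and pb: "\<forall>k\<le>length xs. \<bar>lcar u g (take k xs)\<bar> \<le> B" by auto
    have st: "foldl (\<delta>A B g) (Inl 0) (xs @ [x]) = \<delta>A B g (Inl P) x" using Inl by simp
    show ?thesis
    proof (cases "\<bar>u * P + g x\<bar> \<le> B")
      case True
      have "\<forall>k\<le>length (xs @ [x]). \<bar>lcar u g (take k (xs @ [x]))\<bar> \<le> B"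
      proof (intro allI impI)
        fix k assume "k \<le> length (xs @ [x])"
        then consider "k \<le> length xs" | "k = Suc (length xs)" by force
        then show "\<bar>lcar u g (take k (xs @ [x]))\<bar> \<le> B"
        proof cases
          case 1 then show ?thesis using pb by simp
        next
          case 2 then show ?thesis using True P by (simp add: lcar_snoc)
        qed
      qed
      moreover have "\<delta>A B g (Inl P) x = Inl (u * P + g x)" using True by (simp add: \<delta>A_def)
      ultimately show ?thesis using st P by (simp add: lcar_snoc)
    next
      case False
      then have "\<delta>A B g (Inl P) x = Inr (u * P + g x > 0)" by (simp add: \<delta>A_def)
      then show ?thesis using st P False by (auto simp: lcar_snoc)
    qed
  next
    case (Inr b)
    have st: "foldl (\<delta>A B g) (Inl 0) (xs @ [x]) = Inr b" using Inr by (simp add: \<delta>A_def[of B g "Inr b"])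
    show ?thesis
    proof (cases b)
      case True
      then have "lcar u g xs > B" using snoc Inr by simp
      then have "u * lcar u g xs - Mg > B"
      proof -
        have "u * lcar u g xs = lcar u g xs + (u - 1) * lcar u g xs" by (simp add: algebra_simps)
        moreover have "(u - 1) * lcar u g xs \<ge> (u - 1) * B"
          using \<open>lcar u g xs > B\<close> u by (intro mult_left_mono) auto
        ultimately show ?thesis using BM \<open>lcar u g xs > B\<close> by linarith
      qed
      then have "lcar u g (xs @ [x]) > B" unfolding lcar_snoc using gx by linarith
      then show ?thesis using st True by simp
    next
      case False
      then have "lcar u g xs < - B" using snoc Inr by simp
      then have "u * lcar u g xs + Mg < - B"
      proof -
        have "u * lcar u g xs = lcar u g xs + (u - 1) * lcar u g xs" by (simp add: algebra_simps)
        moreover have "(u - 1) * lcar u g xs \<le> (u - 1) * (- B)"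
          using \<open>lcar u g xs < - B\<close> u by (intro mult_left_mono) auto
        ultimately show ?thesis using BM \<open>lcar u g xs < - B\<close> by linarith
      qed
      then have "lcar u g (xs @ [x]) < - B" unfolding lcar_snoc using gx by linarith
      then show ?thesis using st False by simp
    qed
  qed
qed

definition LP :: "nat \<Rightarrow> nat \<Rightarrow> real set" where
  "LP s T = {u powi (- int s) * (\<Sum>j\<le>Suc T. of_int (c j) * u ^ j) | c. True}"

lemma \<delta>A_finite:
  assumes uE: "u + 1 < 3 * of_int E" and B0: "0 \<le> B"
    and gf: "finite (range g)" and gLP: "range g \<subseteq> LP s T"
    and gM: "\<forall>c. \<bar>g c\<bar> \<le> Mg" and BM: "Mg \<le> (u - 1) * B"
  shows "finite {foldl (\<delta>A B g) (Inl 0) xs | xs. True}"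
proof -
  have fR: "finite (FinR (range g) B)"
    by (rule finite_FinR[OF uE B0 gf]) (use gLP in \<open>auto simp: LP_def\<close>)
  have "{foldl (\<delta>A B g) (Inl 0) xs | xs. True} \<subseteq> Inl ` FinR (range g) B \<union> Inr ` UNIV"
  proof
    fix q assume "q \<in> {foldl (\<delta>A B g) (Inl 0) xs | xs. True}"
    then obtain xs where q: "q = foldl (\<delta>A B g) (Inl 0) xs" by auto
    show "q \<in> Inl ` FinR (range g) B \<union> Inr ` UNIV"
    proof (cases q)
      case (Inl P)
      have "(\<forall>i<length xs. g (xs ! i) \<in> range g)" by auto
      moreover have "P = lcar u g xs \<and> (\<forall>k\<le>length xs. \<bar>lcar u g (take k xs)\<bar> \<le> B)"
      proof -
        have fq: "foldl (\<delta>A B g) (Inl 0) xs = Inl P" using q Inl by simp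
        show ?thesis using \<delta>A_inv[OF gM BM B0, of xs] unfolding fq by simp
      qed
      moreover have "car u (\<lambda>i. g (xs ! i)) (length xs) = lcar u g xs"
        using lcar_car[of "length xs" xs u g] by simp
      ultimately have "P \<in> FinR (range g) B" unfolding FinR_def
        by (auto simp: lcar_car intro!: exI[of _ "\<lambda>i. g (xs ! i)"] exI[of _ "length xs"])
      then show ?thesis using Inl by auto
    qed auto
  qed
  then show ?thesis by (rule finite_subset) (use fR in auto)
qed

end

type_synonym lt = "int option list option \<times> bool"

definition stepB :: "nat \<Rightarrow> bool \<Rightarrow> nat" where
  "stepB p b = (if p = 0 then (if b then 1 else 0) else if p = 1 then (if b then 1 else 2)
     else if p = 2 then (if b then 3 else 2) else 3)"

definition "patT bs \<longleftrightarrow> (\<exists>j<length bs. bs ! j)"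
definition "patTF bs \<longleftrightarrow> (\<exists>j1 j2. j1 < j2 \<and> j2 < length bs \<and> bs ! j1 \<and> \<not> bs ! j2)"
definition "patTFT bs \<longleftrightarrow> (\<exists>j1 j2 j3. j1 < j2 \<and> j2 < j3 \<and> j3 < length bs \<and> bs ! j1 \<and> \<not> bs ! j2 \<and> bs ! j3)"

lemma patT_snoc: "patT (bs @ [b]) \<longleftrightarrow> patT bs \<or> b"
proof
  assume "patT (bs @ [b])"
  then obtain j where j: "j < Suc (length bs)" "(bs @ [b]) ! j" unfolding patT_def by auto
  show "patT bs \<or> b"
  proof (cases "j = length bs")
    case True then show ?thesis using j by simp
  next
    case False then have "patT bs" using j unfolding patT_def by (intro exI[of _ j]) (auto simp: nth_append)
    then show ?thesis by simp
  qed
next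
  assume "patT bs \<or> b"
  then show "patT (bs @ [b])"
  proof
    assume "patT bs" then obtain j where "j < length bs" "bs ! j" unfolding patT_def by auto
    then show ?thesis unfolding patT_def by (intro exI[of _ j]) (auto simp: nth_append)
  next
    assume "b" then show ?thesis unfolding patT_def by (intro exI[of _ "length bs"]) auto
  qed
qed

lemma patTF_snoc: "patTF (bs @ [b]) \<longleftrightarrow> patTF bs \<or> (\<not> b \<and> patT bs)"
proof
  assume "patTF (bs @ [b])"
  then obtain j1 j2 where j: "j1 < j2" "j2 < Suc (length bs)" "(bs @ [b]) ! j1" "\<not> (bs @ [b]) ! j2"
    unfolding patTF_def by auto
  show "patTF bs \<or> (\<not> b \<and> patT bs)"
  proof (cases "j2 = length bs")
    case True then show ?thesis using j unfolding patT_def by (auto simp: nth_append)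
  next
    case False then have "patTF bs" using j unfolding patTF_def by (intro exI[of _ j1] exI[of _ j2]) (auto simp: nth_append)
    then show ?thesis by simp
  qed
next
  assume "patTF bs \<or> (\<not> b \<and> patT bs)"
  then show "patTF (bs @ [b])"
  proof
    assume "patTF bs"
    then obtain j1 j2 where "j1 < j2" "j2 < length bs" "bs ! j1" "\<not> bs ! j2" unfolding patTF_def by auto
    then show ?thesis unfolding patTF_def by (intro exI[of _ j1] exI[of _ j2]) (auto simp: nth_append)
  next
    assume "\<not> b \<and> patT bs"
    then obtain j where "j < length bs" "bs ! j" "\<not> b" unfolding patT_def by auto
    then show ?thesis unfolding patTF_def by (intro exI[of _ j] exI[of _ "length bs"]) (auto simp: nth_append)
  qed
qed

lemma patTFT_snoc: "patTFT (bs @ [b]) \<longleftrightarrow> patTFT bs \<or> (b \<and> patTF bs)"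
proof
  assume "patTFT (bs @ [b])"
  then obtain j1 j2 j3 where j: "j1 < j2" "j2 < j3" "j3 < Suc (length bs)" "(bs @ [b]) ! j1" "\<not> (bs @ [b]) ! j2" "(bs @ [b]) ! j3"
    unfolding patTFT_def by auto
  show "patTFT bs \<or> (b \<and> patTF bs)"
  proof (cases "j3 = length bs")
    case True then have "patTF bs \<and> b" using j unfolding patTF_def by (intro conjI exI[of _ j1] exI[of _ j2]) (auto simp: nth_append)
    then show ?thesis by simp
  next
    case False then have "patTFT bs" using j unfolding patTFT_def
      by (intro exI[of _ j1] exI[of _ j2] exI[of _ j3]) (auto simp: nth_append)
    then show ?thesis by simp
  qed
next
  assume "patTFT bs \<or> (b \<and> patTF bs)"
  then show "patTFT (bs @ [b])"
  proof
    assume "patTFT bs"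
    then obtain j1 j2 j3 where "j1 < j2" "j2 < j3" "j3 < length bs" "bs ! j1" "\<not> bs ! j2" "bs ! j3"
      unfolding patTFT_def by auto
    then show ?thesis unfolding patTFT_def
      by (intro exI[of _ j1] exI[of _ j2] exI[of _ j3]) (auto simp: nth_append)
  next
    assume "b \<and> patTF bs"
    then obtain j1 j2 where "j1 < j2" "j2 < length bs" "bs ! j1" "\<not> bs ! j2" "b" unfolding patTF_def by auto
    then show ?thesis unfolding patTFT_def
      by (intro exI[of _ j1] exI[of _ j2] exI[of _ "length bs"]) (auto simp: nth_append)
  qed
qed

lemma patTF_T: "patTF bs \<Longrightarrow> patT bs" unfolding patTF_def patT_def by (blast intro: less_trans)
lemma patTFT_TF: "patTFT bs \<Longrightarrow> patTF bs" unfolding patTF_def patTFT_def by (blast intro: less_trans)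

lemma stepB_run: "foldl stepB 0 bs = (if patTFT bs then 3 else if patTF bs then 2 else if patT bs then 1 else 0)"
proof (induction bs rule: rev_induct)
  case Nil then show ?case by (simp add: patT_def patTF_def patTFT_def)
next
  case (snoc b bs)
  show ?case using snoc patTF_T[of bs] patTFT_TF[of bs]
    by (auto simp: patT_snoc patTF_snoc patTFT_snoc stepB_def)
qed

lemma stepB_le: "foldl stepB 0 bs \<le> 3" by (simp add: stepB_run)

lemma interval_iff: "(\<exists>a b. \<forall>j<length bs. bs ! j \<longleftrightarrow> a \<le> j \<and> j < b) \<longleftrightarrow> \<not> patTFT bs"
proof
  assume "\<exists>a b. \<forall>j<length bs. bs ! j \<longleftrightarrow> a \<le> j \<and> j < b"
  then obtain a b where ab: "\<forall>j<length bs. bs ! j \<longleftrightarrow> a \<le> j \<and> j < b" by auto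
  show "\<not> patTFT bs"
  proof
    assume "patTFT bs"
    then obtain j1 j2 j3 where "j1 < j2" "j2 < j3" "j3 < length bs" "bs ! j1" "\<not> bs ! j2" "bs ! j3"
      unfolding patTFT_def by auto
    then show False using ab by (meson le_less_trans less_imp_le_nat less_trans)
  qed
next
  assume np: "\<not> patTFT bs"
  show "\<exists>a b. \<forall>j<length bs. bs ! j \<longleftrightarrow> a \<le> j \<and> j < b"
  proof (cases "patT bs")
    case False
    then show ?thesis unfolding patT_def by (intro exI[of _ 0] exI[of _ 0]) auto
  next
    case True
    define J where "J = {j. j < length bs \<and> bs ! j}"
    have fJ: "finite J" "J \<noteq> {}" using True unfolding J_def patT_def by auto
    define lo where "lo = Min J"
    define hi where "hi = Max J"
    have aJ: "lo \<in> J" "\<forall>j\<in>J. lo \<le> j" unfolding lo_def using fJ by auto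
    have bJ: "hi \<in> J" "\<forall>j\<in>J. j \<le> hi" unfolding hi_def using fJ by auto
    have "\<forall>j<length bs. bs ! j \<longleftrightarrow> lo \<le> j \<and> j < Suc hi"
    proof (intro allI impI iffI)
      fix j assume j: "j < length bs" "bs ! j"
      then show "lo \<le> j \<and> j < Suc hi" using aJ bJ unfolding J_def by auto
    next
      fix j assume j: "j < length bs" and jab: "lo \<le> j \<and> j < Suc hi"
      show "bs ! j"
      proof (rule ccontr)
        assume nj: "\<not> bs ! j"
        have "lo \<noteq> j" using nj aJ unfolding J_def by auto
        then have j1: "lo < j" using jab by simp
        have "hi \<noteq> j" using nj bJ unfolding J_def by auto
        then have j2: "j < hi" using jab by linarith
        from j1 j2 have "patTFT bs" using aJ(1) bJ(1) nj unfolding patTFT_def J_def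
          by (intro exI[of _ lo] exI[of _ j] exI[of _ hi]) auto
        then show False using np by simp
      qed
    qed
    then show ?thesis by blast
  qed
qed

lemma shape_dfa: "(\<exists>a b. \<forall>j<length bs. bs ! j \<longleftrightarrow> a \<le> j \<and> j < b) \<longleftrightarrow> foldl stepB 0 bs \<noteq> 3"
  unfolding interval_iff stepB_run by auto

lemma flag_count: "(\<exists>f<length s. \<forall>j<length s. P (s ! j) \<longleftrightarrow> j = f) \<longleftrightarrow> length (filter P s) = 1"
proof -
  have "length (filter P s) = card {j. j < length s \<and> P (s ! j)}" by (rule length_filter_conv_card)
  moreover have "card {j. j < length s \<and> P (s ! j)} = 1 \<longleftrightarrow> (\<exists>f. {j. j < length s \<and> P (s ! j)} = {f})"
    by (metis One_nat_def card_1_singleton_iff)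
  moreover have "(\<exists>f. {j. j < length s \<and> P (s ! j)} = {f}) \<longleftrightarrow> (\<exists>f<length s. \<forall>j<length s. P (s ! j) \<longleftrightarrow> j = f)"
    by (auto simp: set_eq_iff)
  ultimately show ?thesis by simp
qed

definition cmp :: "nat \<Rightarrow> lt \<Rightarrow> bool" where
  "cmp i c = (case fst c of Some xs \<Rightarrow> i < length xs \<and> xs ! i \<noteq> None | None \<Rightarrow> False)"

definition dg :: "nat \<Rightarrow> lt \<Rightarrow> int" where
  "dg i c = (case fst c of Some xs \<Rightarrow> (case xs ! i of Some d \<Rightarrow> d | None \<Rightarrow> 0) | None \<Rightarrow> 0)"

definition okL :: "nat \<Rightarrow> int \<Rightarrow> lt \<Rightarrow> bool" where
  "okL r E c = (case fst c of None \<Rightarrow> False | Some xs \<Rightarrow> length xs = r \<and> (\<exists>x\<in>set xs. x \<noteq> None)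
      \<and> (\<forall>x\<in>set xs. \<forall>d. x = Some d \<longrightarrow> \<bar>d\<bar> < E) \<and> (snd c \<longrightarrow> (\<forall>x\<in>set xs. x \<noteq> None)))"

definition Good :: "nat \<Rightarrow> int \<Rightarrow> lt list \<Rightarrow> bool" where
  "Good r E s \<longleftrightarrow> (\<forall>c\<in>set s. okL r E c) \<and> (\<exists>f<length s. \<forall>j<length s. snd (s ! j) \<longleftrightarrow> j = f)
     \<and> (\<forall>i<r. \<exists>a b. \<forall>j<length s. cmp i (s ! j) \<longleftrightarrow> a \<le> j \<and> j < b)"

definition \<delta>S :: "nat \<Rightarrow> int \<Rightarrow> bool \<times> nat \<times> nat list \<Rightarrow> lt \<Rightarrow> bool \<times> nat \<times> nat list" where
  "\<delta>S r E q c = (case q of (ok, n, ps) \<Rightarrow> (ok \<and> okL r E c, min 2 (n + (if snd c then 1 else 0)),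
       map (\<lambda>i. stepB (ps ! i) (cmp i c)) [0..<r]))"

lemma \<delta>S_run: "foldl (\<delta>S r E) (True, 0, replicate r 0) s =
   ((\<forall>c\<in>set s. okL r E c), min 2 (length (filter snd s)), map (\<lambda>i. foldl stepB 0 (map (cmp i) s)) [0..<r])"
proof (induction s rule: rev_induct)
  case Nil then show ?case by (simp add: map_replicate_trivial)
next
  case (snoc x xs)
  show ?case using snoc by (auto simp: \<delta>S_def)
qed

definition "FS = {(ok, n, ps). ok \<and> n = (1::nat) \<and> (\<forall>p\<in>set ps. p \<noteq> (3::nat))}"

lemma Good_dfa: "Good r E s \<longleftrightarrow> foldl (\<delta>S r E) (True, 0, replicate r 0) s \<in> FS"
proof -
  have 1: "(\<forall>i<r. \<exists>a b. \<forall>j<length s. cmp i (s ! j) \<longleftrightarrow> a \<le> j \<and> j < b) \<longleftrightarrow>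
     (\<forall>p\<in>set (map (\<lambda>i. foldl stepB 0 (map (cmp i) s)) [0..<r]). p \<noteq> 3)"
    using shape_dfa[of "map (cmp _) s"] by auto
  have 2: "(\<exists>f<length s. \<forall>j<length s. snd (s ! j) \<longleftrightarrow> j = f) \<longleftrightarrow> min 2 (length (filter snd s)) = 1"
    using flag_count[of s snd] by auto
  show ?thesis unfolding Good_def \<delta>S_run FS_def using 1 2 by auto
qed

lemma \<delta>S_finite: "finite {foldl (\<delta>S r E) (True, 0, replicate r 0) s | s. True}"
proof (rule finite_subset)
  show "{foldl (\<delta>S r E) (True, 0, replicate r 0) s | s. True} \<subseteq> {True, False} \<times> {..2} \<times> {ps. set ps \<subseteq> {..3} \<and> length ps = r}"
    by (auto simp: \<delta>S_run stepB_le)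
  show "finite ({True, False} \<times> {..2::nat} \<times> {ps. set ps \<subseteq> {..3::nat} \<and> length ps = r})"
    by (intro finite_cartesian_product finite_lists_length_eq) auto
qed

lemma wlo_le: "finite (wdom W) \<Longrightarrow> wlo W \<le> 0" unfolding wlo_def by (intro Min_le) auto
lemma whi_ge: "finite (wdom W) \<Longrightarrow> whi W \<ge> 0" unfolding whi_def by (intro Max_ge) auto
lemma wlo_le_dom: "finite (wdom W) \<Longrightarrow> k \<in> wdom W \<Longrightarrow> wlo W \<le> k" unfolding wlo_def by (intro Min_le) auto
lemma whi_ge_dom: "finite (wdom W) \<Longrightarrow> k \<in> wdom W \<Longrightarrow> k \<le> whi W" unfolding whi_def by (intro Max_ge) auto
lemma wlo_in: "finite (wdom W) \<Longrightarrow> wlo W \<in> wdom W \<or> wlo W = 0"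
  unfolding wlo_def using Min_in[of "wdom W \<union> {0}"] by auto
lemma whi_in: "finite (wdom W) \<Longrightarrow> whi W \<in> wdom W \<or> whi W = 0"
  unfolding whi_def using Max_in[of "wdom W \<union> {0}"] by auto

lemma enc_length: "length (enc W) = nat (whi W - wlo W + 1)"
  by (simp add: enc_def)

lemma enc_nth:
  assumes "j < length (enc W)"
  shows "enc W ! j = (W (whi W - int j), whi W - int j = 0)"
proof -
  have l: "length [wlo W..whi W] = nat (whi W - wlo W + 1)" by simp
  have j: "j < length [wlo W..whi W]" using assms by (simp add: enc_def)
  have "rev [wlo W..whi W] ! j = [wlo W..whi W] ! (length [wlo W..whi W] - Suc j)"
    using j by (simp add: rev_nth)
  also have "\<dots> = wlo W + int (length [wlo W..whi W] - Suc j)"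
    by (rule nth_upto) (use j l in linarith)
  also have "\<dots> = whi W - int j" using j l by (simp add: of_nat_diff)
  finally show ?thesis using j by (simp add: enc_def)
qed

lemma lcar_enc:
  assumes "finite (wdom W)"
  shows "lcar u G (enc W) = (\<Sum>k\<in>{wlo W..whi W}. G (W k, k = 0) * u powi (k - wlo W))"
proof -
  define L where "L = nat (whi W - wlo W + 1)"
  have le: "wlo W \<le> whi W" using wlo_le[OF assms] whi_ge[OF assms] by simp
  have "lcar u G (enc W) = (\<Sum>j<L. G (enc W ! j) * u ^ (L - 1 - j))"
    unfolding lcar_closed enc_length L_def ..
  also have "\<dots> = (\<Sum>j<L. G (W (whi W - int j), whi W - int j = 0) * u powi (whi W - int j - wlo W))"
  proof (intro sum.cong refl)
    fix j assume j: "j \<in> {..<L}"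
    have "int (L - 1 - j) = whi W - int j - wlo W" using j le unfolding L_def by auto
    then have "u ^ (L - 1 - j) = u powi (whi W - int j - wlo W)" by (metis power_int_of_nat)
    then show "G (enc W ! j) * u ^ (L - 1 - j) = G (W (whi W - int j), whi W - int j = 0) * u powi (whi W - int j - wlo W)"
      using enc_nth[of j W] j unfolding L_def enc_length by simp
  qed
  also have "\<dots> = (\<Sum>k\<in>{wlo W..whi W}. G (W k, k = 0) * u powi (k - wlo W))"
  proof -
    have "(\<Sum>k\<in>{whi W - (whi W - wlo W + 1) + 1..whi W}. G (W k, k = 0) * u powi (k - wlo W)) =
      (\<Sum>j<nat (whi W - wlo W + 1). G (W (whi W - int j), whi W - int j = 0) * u powi (whi W - int j - wlo W))"
      by (rule sum_int_ivl_nat) (use le in simp)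
    then show ?thesis unfolding L_def by simp
  qed
  finally show ?thesis .
qed

lemma lcar_cong: "(\<And>c. c \<in> set xs \<Longrightarrow> g c = g' c) \<Longrightarrow> lcar u g xs = lcar u g' xs"
  unfolding lcar_def by (induction xs rule: rev_induct) auto

definition "dword m n a = (\<lambda>k. if - int m \<le> k \<and> k \<le> int n then Some (a k) else None)"

lemma digit_words_iff: "w \<in> digit_words E \<longleftrightarrow> (\<exists>m n a. (\<forall>k. \<bar>a k\<bar> < E) \<and> w = dword m n a)"
  unfolding digit_words_def dword_def by auto

lemma wdom_dword: "wdom (dword m n a) = {- int m..int n}"
  unfolding wdom_def dword_def by auto

lemma wdom_conv: "wdom (conv ws) = {k. \<exists>w\<in>set ws. w k \<noteq> None}"
  by (rule set_eqI) (simp add: wdom_def conv_def)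

lemma conv_Some: "k \<in> wdom (conv ws) \<Longrightarrow> conv ws k = Some (map (\<lambda>w. w k) ws)"
proof -
  assume "k \<in> wdom (conv ws)"
  then have "\<exists>w\<in>set ws. w k \<noteq> None" by (simp only: wdom_conv) simp
  then show ?thesis by (simp add: conv_def)
qed

lemma finite_conv:
  assumes "set ws \<subseteq> digit_words E"
  shows "finite (wdom (conv ws))"
proof -
  have "wdom (conv ws) = (\<Union>w\<in>set ws. wdom w)" by (simp only: wdom_conv) (auto simp: wdom_def)
  moreover have "finite (wdom w)" if "w \<in> set ws" for w
  proof -
    have "w \<in> digit_words E" using assms that by auto
    then show ?thesis unfolding digit_words_iff by (auto simp: wdom_dword)
  qed
  ultimately show ?thesis by auto
qed

lemma conv_interval:
  assumes ws: "set ws \<subseteq> digit_words E" and ne: "ws \<noteq> []"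
    and k: "wlo (conv ws) \<le> k" "k \<le> whi (conv ws)"
  shows "k \<in> wdom (conv ws)"
proof -
  have fin: "finite (wdom (conv ws))" by (rule finite_conv[OF ws])
  have dw: "\<exists>m n a. w = dword m n a" if "w \<in> set ws" for w
  proof -
    have "w \<in> digit_words E" using ws that by auto
    then show ?thesis unfolding digit_words_iff by blast
  qed
  have zero: "0 \<in> wdom (conv ws)"
  proof -
    obtain w where w: "w \<in> set ws" using ne by (cases ws) auto
    then obtain m n a where "w = dword m n a" using dw by blast
    then have "w 0 \<noteq> None" by (simp add: dword_def)
    then show ?thesis using w by (simp only: wdom_conv) blast
  qed
  show ?thesis
  proof (cases "k \<le> 0")
    case True
    have "wlo (conv ws) \<in> wdom (conv ws)" using wlo_in[OF fin] zero by auto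
    then obtain w where w: "w \<in> set ws" "w (wlo (conv ws)) \<noteq> None" unfolding wdom_conv by auto
    then obtain m n a where "w = dword m n a" using dw by blast
    then have "w k \<noteq> None" using w k True by (auto simp: dword_def split: if_splits)
    then show ?thesis using w unfolding wdom_conv by auto
  next
    case False
    have "whi (conv ws) \<in> wdom (conv ws)" using whi_in[OF fin] zero by auto
    then obtain w where w: "w \<in> set ws" "w (whi (conv ws)) \<noteq> None" unfolding wdom_conv by auto
    then obtain m n a where "w = dword m n a" using dw by blast
    then have "w k \<noteq> None" using w k False by (auto simp: dword_def split: if_splits)
    then show ?thesis using w unfolding wdom_conv by auto
  qed
qed


lemma dw_of: "w \<in> digit_words E \<Longrightarrow> \<exists>m n a. (\<forall>k. \<bar>a k\<bar> < E) \<and> w = dword m n a"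
  unfolding digit_words_iff by blast

lemma enc_letter:
  assumes ws: "set ws \<subseteq> digit_words E" and ne: "ws \<noteq> []" and j: "j < length (enc (conv ws))"
  shows "enc (conv ws) ! j = (Some (map (\<lambda>w. w (whi (conv ws) - int j)) ws), whi (conv ws) - int j = 0)"
    and "whi (conv ws) - int j \<in> wdom (conv ws)"
proof -
  have "wlo (conv ws) \<le> whi (conv ws) - int j" "whi (conv ws) - int j \<le> whi (conv ws)"
    using j unfolding enc_length by auto
  then show k: "whi (conv ws) - int j \<in> wdom (conv ws)" using conv_interval[OF ws ne] by auto
  show "enc (conv ws) ! j = (Some (map (\<lambda>w. w (whi (conv ws) - int j)) ws), whi (conv ws) - int j = 0)"
    using enc_nth[OF j] conv_Some[OF k] by simp
qed

lemma enc_Good: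
  assumes len: "length ws = r" and ws: "set ws \<subseteq> digit_words E" and r: "r \<ge> 1"
  shows "Good r E (enc (conv ws))"
proof -
  define W where "W = conv ws"
  define s where "s = enc W"
  define hi where "hi = whi W"
  define lo where "lo = wlo W"
  have ne: "ws \<noteq> []" using len r by auto
  have fin: "finite (wdom W)" unfolding W_def by (rule finite_conv[OF ws])
  have hi0: "hi \<ge> 0" "lo \<le> 0" unfolding hi_def lo_def using whi_ge[OF fin] wlo_le[OF fin] by auto
  have L: "length s = nat (hi - lo + 1)" unfolding s_def hi_def lo_def by (rule enc_length)
  have sj: "s ! j = (Some (map (\<lambda>w. w (hi - int j)) ws), hi - int j = 0)" "hi - int j \<in> wdom W"
    if "j < length s" for j
    using enc_letter[OF ws ne, of j] that unfolding s_def hi_def W_def by auto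
  have ok: "okL r E c" if "c \<in> set s" for c
  proof -
    obtain j where j: "j < length s" "c = s ! j" using \<open>c \<in> set s\<close> by (metis in_set_conv_nth)
    define k where "k = hi - int j"
    have c: "c = (Some (map (\<lambda>w. w k) ws), k = 0)" using sj(1)[OF j(1)] j(2) unfolding k_def by simp
    have kd: "k \<in> wdom W" using sj(2)[OF j(1)] unfolding k_def .
    have "\<exists>x\<in>set (map (\<lambda>w. w k) ws). x \<noteq> None" using kd unfolding W_def by (simp only: wdom_conv) auto
    moreover have "\<forall>x\<in>set (map (\<lambda>w. w k) ws). \<forall>d. x = Some d \<longrightarrow> \<bar>d\<bar> < E"
    proof (intro ballI allI impI)
      fix x d assume "x \<in> set (map (\<lambda>w. w k) ws)" "x = Some d"
      then obtain w where w: "w \<in> set ws" "w k = Some d" by auto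
      then obtain m n a where "\<forall>k. \<bar>a k\<bar> < E" "w = dword m n a" using dw_of ws by blast
      then show "\<bar>d\<bar> < E" using w by (auto simp: dword_def split: if_splits)
    qed
    moreover have "k = 0 \<longrightarrow> (\<forall>x\<in>set (map (\<lambda>w. w k) ws). x \<noteq> None)"
    proof (intro impI ballI)
      fix x assume "k = 0" "x \<in> set (map (\<lambda>w. w k) ws)"
      then obtain w where w: "w \<in> set ws" "x = w 0" by auto
      then obtain m n a where "w = dword m n a" using dw_of ws by blast
      then show "x \<noteq> None" using w by (simp add: dword_def)
    qed
    ultimately show ?thesis unfolding c okL_def using len by simp
  qed
  have flag: "\<exists>f<length s. \<forall>j<length s. snd (s ! j) \<longleftrightarrow> j = f"
  proof (intro exI[of _ "nat hi"] conjI allI impI)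
    show "nat hi < length s" using L hi0 by simp
    fix j assume j: "j < length s"
    show "snd (s ! j) \<longleftrightarrow> j = nat hi" using sj(1)[OF j] hi0 by auto
  qed
  have intv: "\<exists>a b. \<forall>j<length s. cmp i (s ! j) \<longleftrightarrow> a \<le> j \<and> j < b" if i: "i < r" for i
  proof -
    have "ws ! i \<in> set ws" using i len by simp
    then obtain m n a where wi: "ws ! i = dword m n a" using dw_of ws by blast
    have "\<forall>j<length s. cmp i (s ! j) \<longleftrightarrow> nat (hi - int n) \<le> j \<and> j < nat (hi + int m + 1)"
    proof (intro allI impI)
      fix j assume j: "j < length s"
      have "cmp i (s ! j) \<longleftrightarrow> (ws ! i) (hi - int j) \<noteq> None"
        using sj(1)[OF j] i len by (simp add: cmp_def)
      also have "\<dots> \<longleftrightarrow> - int m \<le> hi - int j \<and> hi - int j \<le> int n" unfolding wi dword_def by simp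
      also have "\<dots> \<longleftrightarrow> nat (hi - int n) \<le> j \<and> j < nat (hi + int m + 1)" by auto
      finally show "cmp i (s ! j) \<longleftrightarrow> nat (hi - int n) \<le> j \<and> j < nat (hi + int m + 1)" .
    qed
    then show ?thesis by blast
  qed
  show ?thesis unfolding Good_def s_def[symmetric] W_def[symmetric] using ok flag intv by blast
qed

lemma enc_val:
  fixes u :: real
  assumes len: "length ws = r" and ws: "set ws \<subseteq> digit_words E" and r: "r \<ge> 1" and i: "i < r"
    and u0: "u \<noteq> 0"
  shows "lcar u (\<lambda>c. of_int (dg i c)) (enc (conv ws)) = u powi (- wlo (conv ws)) * val_u u (ws ! i)"
proof -
  define W where "W = conv ws"
  have ne: "ws \<noteq> []" using len r by auto
  have fin: "finite (wdom W)" unfolding W_def by (rule finite_conv[OF ws])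
  define dd where "dd k = (case (ws ! i) k of Some d \<Rightarrow> d | None \<Rightarrow> 0)" for k
  have "lcar u (\<lambda>c. of_int (dg i c)) (enc W) = (\<Sum>k\<in>{wlo W..whi W}. of_int (dg i (W k, k = 0)) * u powi (k - wlo W))"
    by (rule lcar_enc[OF fin])
  also have "\<dots> = (\<Sum>k\<in>{wlo W..whi W}. u powi (- wlo W) * (of_int (dd k) * u powi k))"
  proof (intro sum.cong refl)
    fix k assume k: "k \<in> {wlo W..whi W}"
    then have kd: "k \<in> wdom W" unfolding W_def using conv_interval[OF ws ne] by auto
    have "dg i (W k, k = 0) = dd k"
      using conv_Some[OF kd[unfolded W_def]] i len unfolding W_def dd_def dg_def by simp
    moreover have "u powi (k - wlo W) = u powi (- wlo W) * u powi k"
      using powi_mult_eq[OF u0, of "- wlo W" k] by simp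
    ultimately show "of_int (dg i (W k, k = 0)) * u powi (k - wlo W) = u powi (- wlo W) * (of_int (dd k) * u powi k)"
      by simp
  qed
  also have "\<dots> = u powi (- wlo W) * (\<Sum>k\<in>{wlo W..whi W}. of_int (dd k) * u powi k)"
    by (simp add: sum_distrib_left)
  also have "(\<Sum>k\<in>{wlo W..whi W}. of_int (dd k) * u powi k) = val_u u (ws ! i)"
  proof -
    have sub: "wdom (ws ! i) \<subseteq> {wlo W..whi W}"
    proof
      fix k assume "k \<in> wdom (ws ! i)"
      then have "k \<in> wdom W" unfolding W_def using i len by (simp only: wdom_conv) (auto simp: wdom_def)
      then show "k \<in> {wlo W..whi W}" using wlo_le_dom[OF fin] whi_ge_dom[OF fin] by auto
    qed
    have "val_u u (ws ! i) = (\<Sum>k\<in>wdom (ws ! i). of_int (dd k) * u powi k)"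
      unfolding val_u_def dd_def by (intro sum.cong refl) (auto simp: wdom_def)
    also have "\<dots> = (\<Sum>k\<in>{wlo W..whi W}. of_int (dd k) * u powi k)"
      by (rule sum.mono_neutral_left) (use sub in \<open>auto simp: wdom_def dd_def\<close>)
    finally show ?thesis by simp
  qed
  finally show ?thesis unfolding W_def .
qed


lemma okL_D:
  assumes "okL r E c"
  obtains xs where "fst c = Some xs" "length xs = r" "\<exists>x\<in>set xs. x \<noteq> None"
    "\<forall>x\<in>set xs. \<forall>d. x = Some d \<longrightarrow> \<bar>d\<bar> < E" "snd c \<longrightarrow> (\<forall>x\<in>set xs. x \<noteq> None)"
  using assms unfolding okL_def by (cases "fst c") auto

lemma dec_Good:
  assumes G: "Good r E s" and r: "r \<ge> 1"
  shows "\<exists>ws. length ws = r \<and> set ws \<subseteq> digit_words E \<and> enc (conv ws) = s"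
proof -
  define L where "L = length s"
  have ok: "\<forall>c\<in>set s. okL r E c" using G unfolding Good_def by auto
  obtain f where f: "f < L" "\<forall>j<L. snd (s ! j) \<longleftrightarrow> j = f" using G unfolding Good_def L_def by auto
  have "\<forall>i\<in>{..<r}. \<exists>ab. \<forall>j<L. cmp i (s ! j) \<longleftrightarrow> fst ab \<le> j \<and> j < snd ab"
    using G unfolding Good_def L_def by auto
  then obtain F where F: "\<forall>i\<in>{..<r}. \<forall>j<L. cmp i (s ! j) \<longleftrightarrow> fst (F i) \<le> j \<and> j < snd (F i)"
    by (metis bchoice)
  define A where "A i = fst (F i)" for i
  define Bf where "Bf i = min (snd (F i)) L" for i
  have AB: "cmp i (s ! j) \<longleftrightarrow> A i \<le> j \<and> j < Bf i" if "i < r" "j < L" for i j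
    using F that unfolding A_def Bf_def by auto
  define xs where "xs j = the (fst (s ! j))" for j
  have sj: "fst (s ! j) = Some (xs j)" "length (xs j) = r" "\<exists>x\<in>set (xs j). x \<noteq> None"
    "\<forall>x\<in>set (xs j). \<forall>d. x = Some d \<longrightarrow> \<bar>d\<bar> < E" "snd (s ! j) \<longrightarrow> (\<forall>x\<in>set (xs j). x \<noteq> None)"
    if "j < L" for j
  proof -
    have "okL r E (s ! j)" using ok that unfolding L_def by auto
    then obtain ys where "fst (s ! j) = Some ys" "length ys = r" "\<exists>x\<in>set ys. x \<noteq> None"
      "\<forall>x\<in>set ys. \<forall>d. x = Some d \<longrightarrow> \<bar>d\<bar> < E" "snd (s ! j) \<longrightarrow> (\<forall>x\<in>set ys. x \<noteq> None)"
      by (rule okL_D)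
    then show "fst (s ! j) = Some (xs j)" "length (xs j) = r" "\<exists>x\<in>set (xs j). x \<noteq> None"
      "\<forall>x\<in>set (xs j). \<forall>d. x = Some d \<longrightarrow> \<bar>d\<bar> < E" "snd (s ! j) \<longrightarrow> (\<forall>x\<in>set (xs j). x \<noteq> None)"
      unfolding xs_def by auto
  qed
  have compx: "cmp i (s ! j) \<longleftrightarrow> xs j ! i \<noteq> None" if "i < r" "j < L" for i j
    using sj[OF that(2)] that unfolding cmp_def by simp
  have dgx: "xs j ! i = Some (dg i (s ! j))" if "i < r" "j < L" "cmp i (s ! j)" for i j
    using sj[OF that(2)] that compx[OF that(1,2)] unfolding dg_def by (cases "xs j ! i") auto
  have Af: "A i \<le> f \<and> f < Bf i" if "i < r" for i
  proof -
    have "xs f ! i \<noteq> None" using sj[OF f(1)] f that by (simp add: nth_mem)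
    then show ?thesis using AB[OF that f(1)] compx[OF that f(1)] by simp
  qed
  have BL: "Bf i \<le> L" for i unfolding Bf_def by simp
  define nn where "nn i = f - A i" for i
  define mm where "mm i = Bf i - 1 - f" for i
  have inr: "- int (mm i) \<le> k \<and> k \<le> int (nn i) \<longleftrightarrow> (0 \<le> int f - k \<and> A i \<le> nat (int f - k) \<and> nat (int f - k) < Bf i)"
    if "i < r" for i k
    using Af[OF that] unfolding nn_def mm_def by auto
  define aa where "aa i k = (if - int (mm i) \<le> k \<and> k \<le> int (nn i) then dg i (s ! nat (int f - k)) else 0)" for i k
  define w where "w i = dword (mm i) (nn i) (aa i)" for i
  define ws where "ws = map w [0..<r]"
  have E0: "E > 0"
  proof -
    obtain x where "x \<in> set (xs f)" "x \<noteq> None" using sj(3)[OF f(1)] by auto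
    then show ?thesis using sj(4)[OF f(1)] by (cases x) force+
  qed
  have wk: "w i k \<noteq> None \<longleftrightarrow> (0 \<le> int f - k \<and> nat (int f - k) < L \<and> cmp i (s ! nat (int f - k)))"
    if "i < r" for i k
    unfolding w_def dword_def using inr[OF that, of k] AB[OF that] BL[of i] by auto
  have wk2: "w i k = Some (dg i (s ! nat (int f - k)))" if "i < r" "w i k \<noteq> None" for i k
    using that unfolding w_def dword_def aa_def by (auto split: if_splits)
  have aab: "\<bar>aa i k\<bar> < E" if "i < r" for i k
  proof (cases "- int (mm i) \<le> k \<and> k \<le> int (nn i)")
    case True
    then have "w i k \<noteq> None" unfolding w_def dword_def by simp
    then have c: "0 \<le> int f - k" "nat (int f - k) < L" "cmp i (s ! nat (int f - k))" using wk[OF that] by auto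
    have "xs (nat (int f - k)) ! i = Some (dg i (s ! nat (int f - k)))" using dgx[OF that c(2,3)] .
    moreover have "xs (nat (int f - k)) ! i \<in> set (xs (nat (int f - k)))" using sj(2)[OF c(2)] that by simp
    ultimately have "\<bar>dg i (s ! nat (int f - k))\<bar> < E" using sj(4)[OF c(2)] by metis
    then show ?thesis using True unfolding aa_def by simp
  next
    case False then show ?thesis unfolding aa_def using E0 by auto
  qed
  have len: "length ws = r" unfolding ws_def by simp
  have wsd: "set ws \<subseteq> digit_words E"
  proof
    fix x assume "x \<in> set ws"
    then obtain i where i: "i < r" "x = w i" unfolding ws_def by auto
    show "x \<in> digit_words E" unfolding digit_words_iff using aab[OF i(1)] i(2) unfolding w_def by blast
  qed
  have dom: "wdom (conv ws) = {int f - int L + 1..int f}"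
  proof (simp only: wdom_conv, intro set_eqI iffI)
    fix k assume "k \<in> {k. \<exists>w\<in>set ws. w k \<noteq> None}"
    then obtain i where i: "i < r" "w i k \<noteq> None" unfolding ws_def by auto
    then show "k \<in> {int f - int L + 1..int f}" using wk[OF i(1)] by auto
  next
    fix k assume k: "k \<in> {int f - int L + 1..int f}"
    define j where "j = nat (int f - k)"
    have j: "j < L" "int f - k = int j" using k unfolding j_def by auto
    obtain x where x: "x \<in> set (xs j)" "x \<noteq> None" using sj(3)[OF j(1)] by auto
    then obtain i where i: "i < r" "xs j ! i = x" using sj(2)[OF j(1)] by (metis in_set_conv_nth)
    have "cmp i (s ! j)" using compx[OF i(1) j(1)] i x by simp
    then have "w i k \<noteq> None" using wk[OF i(1), of k] j by simp
    then show "k \<in> {k. \<exists>w\<in>set ws. w k \<noteq> None}" unfolding ws_def using i by auto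
  qed
  have fin: "finite (wdom (conv ws))" unfolding dom by simp
  have lo: "wlo (conv ws) = int f - int L + 1"
    unfolding wlo_def dom using f(1) by (intro Min_eqI) auto
  have hi: "whi (conv ws) = int f"
    unfolding whi_def dom using f(1) by (intro Max_eqI) auto
  have "enc (conv ws) = s"
  proof (rule nth_equalityI)
    show l: "length (enc (conv ws)) = length s" unfolding enc_length lo hi L_def by simp
    fix j assume "j < length (enc (conv ws))"
    then have j: "j < L" using l unfolding L_def by simp
    have kd: "int f - int j \<in> wdom (conv ws)" unfolding dom using j by auto
    have e: "enc (conv ws) ! j = (Some (map (\<lambda>w. w (int f - int j)) ws), int f - int j = 0)"
      using enc_nth[of j "conv ws"] l j conv_Some[OF kd] unfolding hi L_def by simp
    have m: "map (\<lambda>w. w (int f - int j)) ws = xs j"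
    proof (rule nth_equalityI)
      show "length (map (\<lambda>w. w (int f - int j)) ws) = length (xs j)" using sj(2)[OF j] len by simp
      fix i assume "i < length (map (\<lambda>w. w (int f - int j)) ws)"
      then have i: "i < r" using len by simp
      have nj: "nat (int f - (int f - int j)) = j" by simp
      show "map (\<lambda>w. w (int f - int j)) ws ! i = xs j ! i"
      proof (cases "cmp i (s ! j)")
        case True
        then have "w i (int f - int j) \<noteq> None" using wk[OF i, of "int f - int j"] j by simp
        from wk2[OF i this] have "w i (int f - int j) = Some (dg i (s ! j))" unfolding nj .
        then show ?thesis using dgx[OF i j True] unfolding ws_def using i by simp
      next
        case False
        then have "w i (int f - int j) = None" using wk[OF i, of "int f - int j"] j by simp
        then show ?thesis using compx[OF i j] False unfolding ws_def using i by simp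
      qed
    qed
    have "s ! j = (Some (xs j), snd (s ! j))" using sj(1)[OF j] by (metis prod.collapse)
    moreover have "snd (s ! j) \<longleftrightarrow> int f - int j = 0" using f(2) j by auto
    ultimately show "enc (conv ws) ! j = s ! j" using e m by simp
  qed
  then show ?thesis using len wsd by blast
qed

lemma okL_dg:
  assumes "okL r E c" "i < r"
  shows "\<bar>dg i c\<bar> < E"
proof -
  obtain xs where xs: "fst c = Some xs" "length xs = r" "\<exists>x\<in>set xs. x \<noteq> None"
    "\<forall>x\<in>set xs. \<forall>d. x = Some d \<longrightarrow> \<bar>d\<bar> < E" using assms(1) by (rule okL_D)
  then have E0: "E > 0" by (metis abs_ge_zero le_less_trans option.exhaust)
  show ?thesis
  proof (cases "xs ! i")
    case None then show ?thesis using xs E0 by (simp add: dg_def)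
  next
    case (Some d)
    then have "Some d \<in> set xs" using assms(2) xs(2) by (metis nth_mem)
    then show ?thesis using xs Some by (simp add: dg_def)
  qed
qed

context cfg
begin

lemma auto_rel:
  fixes lam :: "nat \<Rightarrow> real" and R :: "real list \<Rightarrow> bool" and mode :: bool
  assumes uE: "u + 1 < 3 * of_int E" and r: "r \<ge> 1"
    and LPh: "\<forall>ds::nat \<Rightarrow> int. (\<forall>i<r. \<bar>ds i\<bar> < E) \<longrightarrow> (\<Sum>i<r. lam i * of_int (ds i)) \<in> LP s T"
    and Rh: "\<forall>ws. length ws = r \<and> set ws \<subseteq> digit_words E \<longrightarrow>
        (R (map (val_u u) ws) \<longleftrightarrow> (if mode then (\<Sum>i<r. lam i * val_u u (ws ! i)) > 0 else (\<Sum>i<r. lam i * val_u u (ws ! i)) = 0))"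
  shows "automatic_relation (digit_words E) (val_u u) r R"
proof -
  define \<Phi> where "\<Phi> x = (if mode then x > 0 else x = (0::real))" for x
  define g where "g c = (if okL r E c then (\<Sum>i<r. lam i * of_int (dg i c)) else 0)" for c
  define Rg where "Rg = (\<lambda>ds. \<Sum>i<r. lam i * of_int (ds i)) ` PiE {..<r} (\<lambda>_. {-E..E})"
  have rg: "range g \<subseteq> insert 0 Rg"
  proof
    fix x assume "x \<in> range g"
    then obtain c where x: "x = g c" by auto
    show "x \<in> insert 0 Rg"
    proof (cases "okL r E c")
      case True
      have "restrict (\<lambda>i. dg i c) {..<r} \<in> PiE {..<r} (\<lambda>_. {-E..E})"
      proof (rule PiE_I)
        fix i assume "i \<in> {..<r}"
        then have "\<bar>dg i c\<bar> < E" using okL_dg[OF True] by simp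
        then show "restrict (\<lambda>i. dg i c) {..<r} i \<in> {-E..E}" using \<open>i \<in> {..<r}\<close> by (auto simp: abs_less_iff)
      qed simp
      moreover have "x = (\<Sum>i<r. lam i * of_int (restrict (\<lambda>i. dg i c) {..<r} i))"
        using x True unfolding g_def by simp
      ultimately show ?thesis unfolding Rg_def by blast
    qed (use x g_def in simp)
  qed
  have gf: "finite (range g)"
    by (rule finite_subset[OF rg]) (auto simp: Rg_def intro!: finite_imageI finite_PiE)
  have gLP: "range g \<subseteq> LP s T"
  proof
    fix x assume "x \<in> range g"
    then obtain c where x: "x = g c" by auto
    show "x \<in> LP s T"
    proof (cases "okL r E c")
      case True
      then show ?thesis using LPh[rule_format, of "\<lambda>i. dg i c"] okL_dg[OF True] x unfolding g_def by simp
    next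
      case False
      then have "x = u powi (- int s) * (\<Sum>j\<le>Suc T. of_int ((\<lambda>_. 0::int) j) * u ^ j)" using x unfolding g_def by simp
      then show ?thesis unfolding LP_def by (intro CollectI exI[of _ "\<lambda>_. 0::int"]) simp
    qed
  qed
  define Mg where "Mg = Max (insert 0 (abs ` range g))"
  have fin: "finite (insert 0 (abs ` range g))" using gf by simp
  have gM: "\<forall>c. \<bar>g c\<bar> \<le> Mg" unfolding Mg_def by (intro allI Max_ge[OF fin]) simp
  have Mg0: "0 \<le> Mg" unfolding Mg_def by (intro Max_ge[OF fin]) simp
  define B where "B = Mg / (u - 1)"
  have B0: "0 \<le> B" unfolding B_def using Mg0 u by simp
  have BM: "Mg \<le> (u - 1) * B" unfolding B_def using u by simp
  define FA where "FA = {q. case q of Inl P \<Rightarrow> \<Phi> P | Inr b \<Rightarrow> mode \<and> b}"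
  have arith: "foldl (\<delta>A B g) (Inl 0) xs \<in> FA \<longleftrightarrow> \<Phi> (lcar u g xs)" for xs
  proof -
    note inv = \<delta>A_inv[OF gM BM B0, of xs]
    show ?thesis
    proof (cases "foldl (\<delta>A B g) (Inl 0) xs")
      case (Inl P) then show ?thesis using inv unfolding FA_def by simp
    next
      case (Inr b) then show ?thesis using inv B0 unfolding FA_def \<Phi>_def by (cases b; cases mode) auto
    qed
  qed
  have val: "\<Phi> (lcar u g (enc (conv ws))) \<longleftrightarrow> R (map (val_u u) ws)"
    if ws: "length ws = r" "set ws \<subseteq> digit_words E" for ws
  proof -
    have G: "Good r E (enc (conv ws))" by (rule enc_Good[OF ws r])
    have "lcar u g (enc (conv ws)) = lcar u (\<lambda>c. \<Sum>i<r. lam i * of_int (dg i c)) (enc (conv ws))"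
      by (rule lcar_cong) (use G in \<open>auto simp: Good_def g_def\<close>)
    also have "\<dots> = (\<Sum>i<r. lam i * lcar u (\<lambda>c. of_int (dg i c)) (enc (conv ws)))"
      by (simp add: lcar_sum lcar_scale)
    also have "\<dots> = u powi (- wlo (conv ws)) * (\<Sum>i<r. lam i * val_u u (ws ! i))"
      using enc_val[OF ws r _ u0] by (simp add: sum_distrib_left algebra_simps)
    finally have e: "lcar u g (enc (conv ws)) = u powi (- wlo (conv ws)) * (\<Sum>i<r. lam i * val_u u (ws ! i))" .
    have p: "u powi (- wlo (conv ws)) > 0" using u by simp
    have "\<Phi> (lcar u g (enc (conv ws))) \<longleftrightarrow> \<Phi> (\<Sum>i<r. lam i * val_u u (ws ! i))"
      unfolding e \<Phi>_def using p u0 by (simp add: zero_less_mult_iff)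
    then show ?thesis using Rh ws unfolding \<Phi>_def by simp
  qed
  define L where "L = {conv ws | ws. length ws = r \<and> set ws \<subseteq> digit_words E \<and> R (map (val_u u) ws)}"
  have words: "\<forall>w\<in>L. is_word w" unfolding L_def is_word_def using finite_conv by blast
  have encL: "enc ` L = {xs. foldl (\<delta>S r E) (True, 0, replicate r 0) xs \<in> FS \<and> foldl (\<delta>A B g) (Inl 0) xs \<in> FA}"
  proof (intro set_eqI iffI)
    fix xs assume "xs \<in> enc ` L"
    then obtain ws where ws: "length ws = r" "set ws \<subseteq> digit_words E" "R (map (val_u u) ws)" "xs = enc (conv ws)"
      unfolding L_def by auto
    show "xs \<in> {xs. foldl (\<delta>S r E) (True, 0, replicate r 0) xs \<in> FS \<and> foldl (\<delta>A B g) (Inl 0) xs \<in> FA}"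
      using enc_Good[OF ws(1,2) r] val[OF ws(1,2)] ws(3,4) arith Good_dfa by auto
  next
    fix xs assume "xs \<in> {xs. foldl (\<delta>S r E) (True, 0, replicate r 0) xs \<in> FS \<and> foldl (\<delta>A B g) (Inl 0) xs \<in> FA}"
    then have G: "Good r E xs" and A: "\<Phi> (lcar u g xs)" using Good_dfa arith by auto
    obtain ws where ws: "length ws = r" "set ws \<subseteq> digit_words E" "enc (conv ws) = xs"
      using dec_Good[OF G r] by blast
    have "R (map (val_u u) ws)" using val[OF ws(1,2)] A ws(3) by simp
    then show "xs \<in> enc ` L" unfolding L_def using ws by blast
  qed
  have "regular_lang (enc ` L)" unfolding encL
    by (rule regular_product[OF \<delta>S_finite \<delta>A_finite[OF uE B0 gf gLP gM BM]])
  then show ?thesis unfolding automatic_relation_def regular_words_def L_def[symmetric] using words by blast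
qed

end

inductive_set Zs :: "real \<Rightarrow> real set" for u :: real where
  gen: "of_int n * u powi k \<in> Zs u"
| add: "x \<in> Zs u \<Longrightarrow> y \<in> Zs u \<Longrightarrow> x + y \<in> Zs u"

lemma Zs_zero: "0 \<in> Zs u" using Zs.gen[of 0 u 0] by simp
lemma Zs_int: "of_int n \<in> Zs u" using Zs.gen[of n u 0] by simp
lemma Zs_one: "1 \<in> Zs u" using Zs_int[of 1 u] by simp

lemma Zs_neg: "x \<in> Zs u \<Longrightarrow> - x \<in> Zs u"
proof (induction rule: Zs.induct)
  case (gen n k) then show ?case using Zs.gen[of "- n" u k] by simp
next
  case (add x y) then show ?case using Zs.add[of "- x" u "- y"] by simp
qed

lemma Zs_mult_gen:
  assumes u0: "u \<noteq> 0" and y: "y \<in> Zs u"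
  shows "of_int n * u powi k * y \<in> Zs u"
  using y
proof (induction rule: Zs.induct)
  case (gen m j)
  have "of_int n * u powi k * (of_int m * u powi j) = of_int (n * m) * u powi (k + j)"
    using powi_mult_eq[OF u0, of k j] by (simp add: algebra_simps)
  then show ?case using Zs.gen by metis
next
  case (add x y) then show ?case by (simp add: distrib_left Zs.add)
qed

lemma Zs_mult:
  assumes u0: "u \<noteq> 0" and x: "x \<in> Zs u" and y: "y \<in> Zs u"
  shows "x * y \<in> Zs u"
  using x
proof (induction rule: Zs.induct)
  case (gen n k) then show ?case using Zs_mult_gen[OF u0 y] by simp
next
  case (add x1 x2) then show ?case by (simp add: distrib_right Zs.add)
qed

lemma Zs_sum: "(\<And>x. x \<in> A \<Longrightarrow> f x \<in> Zs u) \<Longrightarrow> sum f A \<in> Zs u"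
proof (induction A rule: infinite_finite_induct)
  case (infinite A) then show ?case by (simp add: Zs_zero)
next
  case empty then show ?case by (simp add: Zs_zero)
next
  case (insert x F) then show ?case by (simp add: Zs.add)
qed

lemma Zs_power: "u \<noteq> 0 \<Longrightarrow> x \<in> Zs u \<Longrightarrow> x ^ k \<in> Zs u"
  by (induction k) (auto simp: Zs_one Zs_mult)

lemma lp_eval_Zs: "lp_eval p u \<in> Zs u"
  unfolding lp_eval_def by (rule Zs_sum) (rule Zs.gen)

lemma val_dword: "val_u u (dword m n a) = (\<Sum>k\<in>{- int m..int n}. of_int (a k) * u powi k)"
  unfolding val_u_def wdom_dword by (intro sum.cong refl) (simp add: dword_def)

lemma val_Zs: "w \<in> digit_words E \<Longrightarrow> val_u u w \<in> Zs u"
  unfolding digit_words_iff by (auto simp: val_dword intro!: Zs_sum Zs.gen)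

lemma Zs_rep:
  assumes "x \<in> Zs u" and u0: "u \<noteq> 0"
  shows "\<exists>c K. finite K \<and> (\<forall>k. k \<notin> K \<longrightarrow> c k = 0) \<and> x = (\<Sum>k\<in>K. of_int (c k) * u powi k)"
  using assms(1)
proof (induction rule: Zs.induct)
  case (gen n k)
  then show ?case by (intro exI[of _ "\<lambda>j. if j = k then n else 0"] exI[of _ "{k}"]) auto
next
  case (add x y)
  then obtain c K c' K' where c: "finite K" "\<forall>k. k \<notin> K \<longrightarrow> c k = 0" "x = (\<Sum>k\<in>K. of_int (c k) * u powi k)"
    and c': "finite K'" "\<forall>k. k \<notin> K' \<longrightarrow> c' k = 0" "y = (\<Sum>k\<in>K'. of_int (c' k) * u powi k)" by blast
  have 1: "x = (\<Sum>k\<in>K \<union> K'. of_int (c k) * u powi k)"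
    unfolding c(3) by (rule sum.mono_neutral_left) (use c c' in auto)
  have 2: "y = (\<Sum>k\<in>K \<union> K'. of_int (c' k) * u powi k)"
    unfolding c'(3) by (rule sum.mono_neutral_left) (use c c' in auto)
  show ?case
    by (intro exI[of _ "\<lambda>k. c k + c' k"] exI[of _ "K \<union> K'"])
      (use c c' 1 2 in \<open>auto simp: sum.distrib distrib_right\<close>)
qed


lemma normalize:
  fixes p4 c :: "int \<Rightarrow> int" and E l :: int and u :: real
  assumes u0: "u \<noteq> 0" and fin4: "finite {k. p4 k \<noteq> 0}"
    and p4: "(\<Sum>k\<in>{k. p4 k \<noteq> 0}. of_int (p4 k) * u powi k) = 0"
    and El: "p4 l = E" and dom: "E > (\<Sum>k\<in>{k. p4 k \<noteq> 0} - {l}. \<bar>p4 k\<bar>)"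
    and K: "finite K" "\<forall>k. k \<notin> K \<longrightarrow> c k = 0"
  shows "(\<Sum>k\<in>K. of_int (c k) * u powi k) \<in> val_u u ` digit_words E"
proof -
  define P4 where "P4 = {k. p4 k \<noteq> 0}"
  have E0: "E > 0" using dom by (metis (no_types, lifting) abs_ge_zero le_less_trans sum_nonneg)
  have lP: "l \<in> P4" using El E0 unfolding P4_def by simp
  have fP: "finite P4" using fin4 unfolding P4_def .
  define nrm where "nrm c K = nat (\<Sum>k\<in>K. \<bar>c k\<bar>)" for c :: "int \<Rightarrow> int" and K :: "int set"
  have main: "\<And>c K. nrm c K = N \<Longrightarrow> finite K \<Longrightarrow> (\<forall>k. k \<notin> K \<longrightarrow> c k = 0) \<Longrightarrow>
      (\<Sum>k\<in>K. of_int (c k) * u powi k) \<in> val_u u ` digit_words E" for N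
  proof (induction N rule: less_induct)
    case (less N c K)
    show ?case
    proof (cases "\<forall>k\<in>K. \<bar>c k\<bar> < E")
      case True
      then have ca: "\<forall>k. \<bar>c k\<bar> < E" using less.prems E0 by (metis abs_zero)
      define m where "m = nat (- Min (K \<union> {0}))"
      define n where "n = nat (Max (K \<union> {0}))"
      have sub: "K \<subseteq> {- int m..int n}"
      proof
        fix k assume k: "k \<in> K"
        have "Min (K \<union> {0}) \<le> k" "k \<le> Max (K \<union> {0})" using k less.prems(2) by auto
        then show "k \<in> {- int m..int n}" unfolding m_def n_def by auto
      qed
      have "val_u u (dword m n c) = (\<Sum>k\<in>K. of_int (c k) * u powi k)"
        unfolding val_dword by (rule sum.mono_neutral_right) (use sub less.prems in auto)
      moreover have "dword m n c \<in> digit_words E" unfolding digit_words_iff using ca by blast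
      ultimately show ?thesis by (metis image_eqI)
    next
      case False
      then obtain k0 where k0: "k0 \<in> K" "\<bar>c k0\<bar> \<ge> E" by (auto simp: not_less)
      define \<sigma> where "\<sigma> = sgn (c k0)"
      define t where "t = k0 - l"
      define c' where "c' j = c j - \<sigma> * p4 (j - t)" for j
      define K' where "K' = K \<union> (\<lambda>i. i + t) ` P4"
      have fK': "finite K'" unfolding K'_def using less.prems fP by simp
      have KK: "K \<subseteq> K'" unfolding K'_def by auto
      have p4z: "p4 (j - t) = 0" if "j \<notin> (\<lambda>i. i + t) ` P4" for j
      proof -
        have "j - t \<notin> P4" using that by (metis diff_add_cancel image_eqI)
        then show ?thesis unfolding P4_def by simp
      qed
      have c'z: "\<forall>k. k \<notin> K' \<longrightarrow> c' k = 0" unfolding c'_def K'_def using less.prems(3) p4z by auto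
      have img: "(\<Sum>j\<in>(\<lambda>i. i + t) ` A. f j) = (\<Sum>i\<in>A. f (i + t))" for A and f :: "int \<Rightarrow> 'a::comm_monoid_add"
        by (subst sum.reindex) (auto simp: inj_on_def)
      have v1: "(\<Sum>j\<in>K'. of_int (c j) * u powi j) = (\<Sum>j\<in>K. of_int (c j) * u powi j)"
        by (rule sum.mono_neutral_right[OF fK' KK]) (use less.prems in auto)
      have v2: "(\<Sum>j\<in>K'. of_int (p4 (j - t)) * u powi j) = 0"
      proof -
        have "(\<Sum>j\<in>K'. of_int (p4 (j - t)) * u powi j) = (\<Sum>j\<in>(\<lambda>i. i + t) ` P4. of_int (p4 (j - t)) * u powi j)"
          by (rule sum.mono_neutral_right[OF fK']) (auto simp: K'_def p4z)
        also have "\<dots> = (\<Sum>i\<in>P4. of_int (p4 i) * u powi (i + t))" by (simp add: img)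
        also have "\<dots> = u powi t * (\<Sum>i\<in>P4. of_int (p4 i) * u powi i)"
          by (simp add: sum_distrib_left powi_mult_eq[OF u0, symmetric] algebra_simps)
        also have "\<dots> = 0" using p4 unfolding P4_def by simp
        finally show ?thesis .
      qed
      have val: "(\<Sum>j\<in>K'. of_int (c' j) * u powi j) = (\<Sum>k\<in>K. of_int (c k) * u powi k)"
      proof -
        have "(\<Sum>j\<in>K'. of_int (c' j) * u powi j) = (\<Sum>j\<in>K'. of_int (c j) * u powi j) - of_int \<sigma> * (\<Sum>j\<in>K'. of_int (p4 (j - t)) * u powi j)"
          unfolding c'_def by (simp add: sum_subtractf sum_distrib_left algebra_simps)
        then show ?thesis using v1 v2 by simp
      qed
      have k0K': "k0 \<in> K'" using k0 KK by auto
      have ck0: "\<bar>c' k0\<bar> = \<bar>c k0\<bar> - E"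
      proof -
        have "p4 (k0 - t) = E" unfolding t_def using El by simp
        then have "c' k0 = c k0 - \<sigma> * E" unfolding c'_def by simp
        then show ?thesis using k0(2) E0 unfolding \<sigma>_def by (cases "c k0 \<ge> 0") (auto simp: sgn_if)
      qed
      have sig: "\<bar>\<sigma>\<bar> \<le> 1" unfolding \<sigma>_def by (simp add: sgn_if)
      have pk: "(\<Sum>j\<in>K' - {k0}. \<bar>p4 (j - t)\<bar>) < E"
      proof -
        have "(\<Sum>j\<in>K' - {k0}. \<bar>p4 (j - t)\<bar>) = (\<Sum>j\<in>(\<lambda>i. i + t) ` P4 - {k0}. \<bar>p4 (j - t)\<bar>)"
          by (rule sum.mono_neutral_right) (use fK' p4z in \<open>force simp: K'_def\<close>)+
        also have "(\<lambda>i. i + t) ` P4 - {k0} = (\<lambda>i. i + t) ` (P4 - {l})" unfolding t_def by auto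
        also have "(\<Sum>j\<in>(\<lambda>i. i + t) ` (P4 - {l}). \<bar>p4 (j - t)\<bar>) = (\<Sum>i\<in>P4 - {l}. \<bar>p4 i\<bar>)"
          by (simp add: img)
        finally show ?thesis using dom unfolding P4_def by simp
      qed
      have tri: "(\<Sum>j\<in>K' - {k0}. \<bar>c' j\<bar>) \<le> (\<Sum>j\<in>K' - {k0}. \<bar>c j\<bar>) + (\<Sum>j\<in>K' - {k0}. \<bar>p4 (j - t)\<bar>)"
      proof -
        have "\<bar>c' j\<bar> \<le> \<bar>c j\<bar> + \<bar>p4 (j - t)\<bar>" for j
        proof -
          have "\<bar>\<sigma> * p4 (j - t)\<bar> \<le> \<bar>p4 (j - t)\<bar>" using sig by (simp add: abs_mult mult_left_le_one_le)
          then show ?thesis unfolding c'_def by linarith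
        qed
        then show ?thesis by (simp add: sum.distrib[symmetric] sum_mono)
      qed
      have lt: "(\<Sum>j\<in>K'. \<bar>c' j\<bar>) < (\<Sum>j\<in>K. \<bar>c j\<bar>)"
      proof -
        have "(\<Sum>j\<in>K'. \<bar>c' j\<bar>) = \<bar>c' k0\<bar> + (\<Sum>j\<in>K' - {k0}. \<bar>c' j\<bar>)" by (rule sum.remove[OF fK' k0K'])
        moreover have "(\<Sum>j\<in>K'. \<bar>c j\<bar>) = \<bar>c k0\<bar> + (\<Sum>j\<in>K' - {k0}. \<bar>c j\<bar>)" by (rule sum.remove[OF fK' k0K'])
        moreover have "(\<Sum>j\<in>K'. \<bar>c j\<bar>) = (\<Sum>j\<in>K. \<bar>c j\<bar>)"
          by (rule sum.mono_neutral_right[OF fK' KK]) (use less.prems in auto)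
        ultimately show ?thesis using ck0 tri pk by linarith
      qed
      have "nrm c' K' < N" using lt less.prems(1) unfolding nrm_def
        by (metis (no_types, lifting) abs_ge_zero nat_less_eq_zless sum_nonneg)
      from less.IH[OF this refl fK' c'z] show ?thesis unfolding val .
    qed
  qed
  show ?thesis by (rule main[OF refl K])
qed

lemma powi_mono_exp:
  fixes u :: real
  assumes "u \<ge> 1" "a \<le> b"
  shows "u powi a \<le> u powi b"
proof -
  have u0: "u \<noteq> 0" using assms by simp
  have "u powi b = u powi a * u powi (b - a)" using powi_mult_eq[OF u0, of a "b - a"] by simp
  moreover have "u powi (b - a) \<ge> 1" using assms by (simp add: power_int_nonneg_exp one_le_power)
  moreover have "u powi a > 0" using assms by simp
  ultimately show ?thesis by (metis mult_le_cancel_left1 less_le_not_le)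
qed

lemma u_bound:
  fixes p4 :: "int \<Rightarrow> int" and u :: real
  assumes u: "u > 1" and fin: "finite {k. p4 k \<noteq> 0}"
    and p4: "(\<Sum>k\<in>{k. p4 k \<noteq> 0}. of_int (p4 k) * u powi k) = 0"
    and El: "p4 l = E" and dom: "E > (\<Sum>k\<in>{k. p4 k \<noteq> 0} - {l}. \<bar>p4 k\<bar>)"
  shows "u + 1 < 3 * of_int E"
proof -
  define P where "P = {k. p4 k \<noteq> 0}"
  define D where "D = (\<Sum>k\<in>P - {l}. \<bar>p4 k\<bar>)"
  have D0: "D \<ge> 0" unfolding D_def by (simp add: sum_nonneg)
  have E0: "E > 0" using dom D0 unfolding D_def P_def by linarith
  have lP: "l \<in> P" using El E0 unfolding P_def by simp
  have fP: "finite P" using fin unfolding P_def .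
  define N where "N = Max P"
  have NP: "N \<in> P" unfolding N_def using fP lP by (intro Max_in) auto
  have leN: "k \<le> N" if "k \<in> P" for k unfolding N_def using fP that by simp
  have tot: "(\<Sum>k\<in>P. \<bar>p4 k\<bar>) = E + D" unfolding D_def using sum.remove[OF fP lP, of "\<lambda>k. \<bar>p4 k\<bar>"] El E0 by simp
  define S' where "S' = (\<Sum>k\<in>P - {N}. \<bar>p4 k\<bar>)"
  have S'e: "S' = E + D - \<bar>p4 N\<bar>" unfolding S'_def using sum.remove[OF fP NP, of "\<lambda>k. \<bar>p4 k\<bar>"] tot by simp
  have pN: "\<bar>p4 N\<bar> \<ge> 1" using NP unfolding P_def by simp
  have S'b: "S' \<le> 2 * E - 2" using S'e pN dom unfolding D_def P_def by linarith
  have eq: "of_int (p4 N) * u powi N = - (\<Sum>k\<in>P - {N}. of_int (p4 k) * u powi k)"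
    using sum.remove[OF fP NP, of "\<lambda>k. of_int (p4 k) * u powi k"] p4 unfolding P_def by simp
  have "u powi N \<le> \<bar>of_int (p4 N) * u powi N\<bar>"
  proof -
    have "u powi N > 0" using u by simp
    then show ?thesis using pN by (simp add: abs_mult mult_le_cancel_right1)
  qed
  also have "\<dots> \<le> (\<Sum>k\<in>P - {N}. \<bar>of_int (p4 k) * u powi k\<bar>)" unfolding eq abs_minus_cancel by (rule sum_abs)
  also have "\<dots> \<le> (\<Sum>k\<in>P - {N}. of_int \<bar>p4 k\<bar> * u powi (N - 1))"
  proof (rule sum_mono)
    fix k assume k: "k \<in> P - {N}"
    then have "k \<le> N - 1" using leN by force
    then have "u powi k \<le> u powi (N - 1)" using u by (intro powi_mono_exp) auto
    moreover have "u powi k > 0" using u by simp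
    ultimately show "\<bar>of_int (p4 k) * u powi k\<bar> \<le> of_int \<bar>p4 k\<bar> * u powi (N - 1)"
      by (simp add: abs_mult mult_left_mono)
  qed
  also have "\<dots> = of_int S' * u powi (N - 1)" unfolding S'_def by (simp add: sum_distrib_right)
  finally have "u powi N \<le> of_int S' * u powi (N - 1)" .
  moreover have "u powi N = u * u powi (N - 1)"
    using powi_mult_eq[of u 1 "N - 1"] u by simp
  moreover have "u powi (N - 1) > 0" using u by simp
  ultimately have "u \<le> of_int S'" by (metis mult_le_cancel_right_pos)
  then show ?thesis using S'b E0 by linarith
qed

context cfg
begin

lemma LP_add:
  assumes "x \<in> LP s T" "y \<in> LP s T" shows "x + y \<in> LP s T"
proof -
  obtain c c' where "x = u powi - int s * (\<Sum>j\<le>Suc T. of_int (c j) * u ^ j)" "y = u powi - int s * (\<Sum>j\<le>Suc T. of_int (c' j) * u ^ j)"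
    using assms unfolding LP_def by auto
  then show ?thesis unfolding LP_def
    by (intro CollectI exI[of _ "\<lambda>j. c j + c' j"]) (simp add: sum.distrib distrib_left distrib_right)
qed

lemma LP_smul:
  assumes "x \<in> LP s T" shows "of_int n * x \<in> LP s T"
proof -
  obtain c where "x = u powi - int s * (\<Sum>j\<le>Suc T. of_int (c j) * u ^ j)"
    using assms unfolding LP_def by auto
  then show ?thesis unfolding LP_def
    by (intro CollectI exI[of _ "\<lambda>j. n * c j"]) (simp add: sum_distrib_left algebra_simps)
qed

lemma LP_zero: "0 \<in> LP s T"
  unfolding LP_def by (intro CollectI exI[of _ "\<lambda>_. 0"]) simp

lemma LP_mono:
  assumes "- int s \<le> k" "k \<le> int (Suc T) - int s"
  shows "u powi k \<in> LP s T"
proof -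
  define j0 where "j0 = nat (k + int s)"
  have j0: "j0 \<le> Suc T" "int j0 = k + int s" using assms unfolding j0_def by auto
  have "(\<Sum>j\<le>Suc T. of_int (if j = j0 then 1 else 0) * u ^ j) = u ^ j0"
  proof -
    have "(\<Sum>j\<le>Suc T. of_int (if j = j0 then 1 else 0) * u ^ j) = (\<Sum>j\<in>{..Suc T}. if j = j0 then u ^ j else 0)"
      by (intro sum.cong) auto
    also have "\<dots> = u ^ j0" using j0 by (subst sum.delta) auto
    finally show ?thesis .
  qed
  moreover have "u powi (- int s) * u ^ j0 = u powi k"
  proof -
    have "u ^ j0 = u powi (int j0)" by simp
    then have "u powi (- int s) * u ^ j0 = u powi (- int s + int j0)" using powi_mult_eq[OF u0, of "- int s" "int j0"] by simp
    also have "- int s + int j0 = k" using j0 by simp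
    finally show ?thesis .
  qed
  ultimately show ?thesis unfolding LP_def by (intro CollectI exI[of _ "\<lambda>j. if j = j0 then 1 else 0"]) simp
qed

lemma LP_sum: "(\<And>x. x \<in> A \<Longrightarrow> f x \<in> LP s T) \<Longrightarrow> sum f A \<in> LP s T"
proof (induction A rule: infinite_finite_induct)
  case (infinite A) then show ?case by (simp add: LP_zero)
next
  case empty then show ?case by (simp add: LP_zero)
next
  case (insert x F) then show ?case by (simp add: LP_add)
qed

lemma LP_int: "of_int n \<in> LP 0 0"
  using LP_smul[OF LP_mono[of 0 0 0], of n] by simp

end

context cfg
begin

lemma auto_add:
  assumes uE: "u + 1 < 3 * of_int E"
  shows "automatic_function (digit_words E) (val_u u) 2 (\<lambda>xs. xs ! 0 + xs ! 1)"
  unfolding automatic_function_def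
proof (rule auto_rel[where lam = "\<lambda>i. if i = 2 then -1 else 1" and mode = False and s = 0 and T = 0, OF uE])
  show "Suc 2 \<ge> 1" by simp
  show "\<forall>ds::nat \<Rightarrow> int. (\<forall>i<Suc 2. \<bar>ds i\<bar> < E) \<longrightarrow>
      (\<Sum>i<Suc 2. (if i = 2 then -1 else 1) * of_int (ds i)) \<in> LP 0 0"
  proof (intro allI impI)
    fix ds :: "nat \<Rightarrow> int"
    have e: "(\<Sum>i<Suc 2. (if i = 2 then -1 else 1) * of_int (ds i)) = (of_int (ds 0 + ds 1 - ds 2) :: real)"
      by (simp add: numeral_2_eq_2)
    show "(\<Sum>i<Suc 2. (if i = 2 then -1 else 1) * of_int (ds i)) \<in> LP 0 0" unfolding e by (rule LP_int)
  qed
  show "\<forall>ws. length ws = Suc 2 \<and> set ws \<subseteq> digit_words E \<longrightarrow>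
     ((\<lambda>xs. xs ! 0 + xs ! 1) (take 2 (map (val_u u) ws)) = map (val_u u) ws ! 2 \<longleftrightarrow>
      (if False then 0 < (\<Sum>i<Suc 2. (if i = 2 then -1 else 1) * val_u u (ws ! i))
       else (\<Sum>i<Suc 2. (if i = 2 then -1 else 1) * val_u u (ws ! i)) = 0))"
    by (auto simp: numeral_2_eq_2)
qed

lemma auto_less:
  assumes uE: "u + 1 < 3 * of_int E"
  shows "automatic_relation (digit_words E) (val_u u) 2 (\<lambda>xs. xs ! 0 < xs ! 1)"
proof (rule auto_rel[where lam = "\<lambda>i. if i = 0 then -1 else 1" and mode = True and s = 0 and T = 0, OF uE])
  show "2 \<ge> (1::nat)" by simp
  show "\<forall>ds::nat \<Rightarrow> int. (\<forall>i<2. \<bar>ds i\<bar> < E) \<longrightarrow>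
      (\<Sum>i<2. (if i = 0 then -1 else 1) * of_int (ds i)) \<in> LP 0 0"
  proof (intro allI impI)
    fix ds :: "nat \<Rightarrow> int"
    have e: "(\<Sum>i<2. (if i = 0 then -1 else 1) * of_int (ds i)) = (of_int (ds 1 - ds 0) :: real)"
      by (simp add: numeral_2_eq_2)
    show "(\<Sum>i<2. (if i = 0 then -1 else 1) * of_int (ds i)) \<in> LP 0 0" unfolding e by (rule LP_int)
  qed
  show "\<forall>ws. length ws = 2 \<and> set ws \<subseteq> digit_words E \<longrightarrow>
     ((\<lambda>xs. xs ! 0 < xs ! 1) (map (val_u u) ws) \<longleftrightarrow>
      (if True then 0 < (\<Sum>i<2. (if i = 0 then -1 else 1) * val_u u (ws ! i))
       else (\<Sum>i<2. (if i = 0 then -1 else 1) * val_u u (ws ! i)) = 0))"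
    by (auto simp: numeral_2_eq_2)
qed

lemma auto_eq:
  assumes uE: "u + 1 < 3 * of_int E"
  shows "automatic_relation (digit_words E) (val_u u) 2 (\<lambda>xs. xs ! 0 = xs ! 1)"
proof (rule auto_rel[where lam = "\<lambda>i. if i = 0 then -1 else 1" and mode = False and s = 0 and T = 0, OF uE])
  show "2 \<ge> (1::nat)" by simp
  show "\<forall>ds::nat \<Rightarrow> int. (\<forall>i<2. \<bar>ds i\<bar> < E) \<longrightarrow>
      (\<Sum>i<2. (if i = 0 then -1 else 1) * of_int (ds i)) \<in> LP 0 0"
  proof (intro allI impI)
    fix ds :: "nat \<Rightarrow> int"
    have e: "(\<Sum>i<2. (if i = 0 then -1 else 1) * of_int (ds i)) = (of_int (ds 1 - ds 0) :: real)"
      by (simp add: numeral_2_eq_2)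
    show "(\<Sum>i<2. (if i = 0 then -1 else 1) * of_int (ds i)) \<in> LP 0 0" unfolding e by (rule LP_int)
  qed
  show "\<forall>ws. length ws = 2 \<and> set ws \<subseteq> digit_words E \<longrightarrow>
     ((\<lambda>xs. xs ! 0 = xs ! 1) (map (val_u u) ws) \<longleftrightarrow>
      (if False then 0 < (\<Sum>i<2. (if i = 0 then -1 else 1) * val_u u (ws ! i))
       else (\<Sum>i<2. (if i = 0 then -1 else 1) * val_u u (ws ! i)) = 0))"
    by (auto simp: numeral_2_eq_2)
qed

lemma va_LP:
  assumes "a \<in> digit_words E"
  shows "\<exists>s T. val_u u a \<in> LP s T \<and> (\<forall>n. of_int n \<in> LP s T)"
proof -
  obtain m n aa where a: "a = dword m n aa" using assms unfolding digit_words_iff by blast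
  have "val_u u a \<in> LP m (m + n)"
    unfolding a val_dword by (rule LP_sum, rule LP_smul, rule LP_mono) auto
  moreover have "of_int k \<in> LP m (m + n)" for k
    using LP_smul[OF LP_mono[of m 0 "m + n"], of k] by simp
  ultimately show ?thesis by blast
qed

lemma auto_mul:
  assumes uE: "u + 1 < 3 * of_int E" and a: "a \<in> digit_words E"
  shows "automatic_function (digit_words E) (val_u u) 1 (\<lambda>xs. val_u u a * xs ! 0)"
    and "automatic_function (digit_words E) (val_u u) 1 (\<lambda>xs. xs ! 0 * val_u u a)"
proof -
  obtain s T where LPa: "val_u u a \<in> LP s T" and LPi: "\<forall>n. of_int n \<in> LP s T" using va_LP[OF a] by blast
  have LPh: "\<forall>ds::nat \<Rightarrow> int. (\<forall>i<Suc 1. \<bar>ds i\<bar> < E) \<longrightarrow>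
      (\<Sum>i<Suc 1. (if i = 0 then - val_u u a else 1) * of_int (ds i)) \<in> LP s T"
  proof (intro allI impI)
    fix ds :: "nat \<Rightarrow> int"
    have e: "(\<Sum>i<Suc 1. (if i = 0 then - val_u u a else 1) * of_int (ds i)) = of_int (- ds 0) * val_u u a + of_int (ds 1)"
      by simp
    show "(\<Sum>i<Suc 1. (if i = 0 then - val_u u a else 1) * of_int (ds i)) \<in> LP s T"
      unfolding e by (rule LP_add[OF LP_smul[OF LPa] LPi[rule_format]])
  qed
  show "automatic_function (digit_words E) (val_u u) 1 (\<lambda>xs. val_u u a * xs ! 0)"
    unfolding automatic_function_def
    by (rule auto_rel[where lam = "\<lambda>i. if i = 0 then - val_u u a else 1" and mode = False, OF uE _ LPh])
       (auto simp: algebra_simps)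
  show "automatic_function (digit_words E) (val_u u) 1 (\<lambda>xs. xs ! 0 * val_u u a)"
    unfolding automatic_function_def
    by (rule auto_rel[where lam = "\<lambda>i. if i = 0 then - val_u u a else 1" and mode = False, OF uE _ LPh])
       (auto simp: algebra_simps)
qed

end

lemma Dyadic_Zs:
  assumes b: "b \<ge> 2" and u0: "u \<noteq> 0" and ib: "1 / of_int b \<in> Zs u"
  shows "Dyadic b \<subseteq> Zs u"
proof
  fix x assume "x \<in> Dyadic b"
  then obtain n m where x: "x = of_int n / (of_int b) powi m" unfolding Dyadic_def by auto
  have b0: "(of_int b :: real) \<noteq> 0" using b by simp
  show "x \<in> Zs u"
  proof (cases "m \<ge> 0")
    case True
    have "x = of_int n * (1 / of_int b) ^ nat m"
      unfolding x using True by (simp add: power_int_nonneg_exp power_one_over)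
    then show ?thesis using Zs_mult[OF u0 Zs_int Zs_power[OF u0 ib]] by simp
  next
    case False
    have "(of_int b :: real) powi m = inverse ((of_int b) ^ nat (- m))"
      using False power_int_minus[of "of_int b :: real" "- m"] by (simp add: power_int_nonneg_exp)
    then have "x = of_int (n * b ^ nat (- m))" unfolding x using b0 by (simp add: field_simps)
    then show ?thesis by (simp only: Zs_int)
  qed
qed

lemma Dyadic_dense:
  assumes b: "b \<ge> 2" and xy: "(x::real) < y"
  shows "\<exists>z\<in>Dyadic b. x < z \<and> z < y"
proof -
  define B where "B = (of_int b :: real)"
  have B1: "B > 1" using b unfolding B_def by simp
  obtain k where k: "1 / (y - x) < B ^ k" using real_arch_pow[OF B1] by blast
  have Bk: "B ^ k > 0" using B1 by simp
  define n where "n = \<lfloor>x * B ^ k\<rfloor> + 1"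
  define z where "z = of_int n / B ^ k"
  have zD: "z \<in> Dyadic b" unfolding z_def Dyadic_def B_def
    by (intro CollectI exI[of _ n] exI[of _ "int k"]) simp
  have "x * B ^ k < of_int n" unfolding n_def by linarith
  then have xz: "x < z" unfolding z_def using Bk by (simp add: field_simps)
  have "of_int n \<le> x * B ^ k + 1" unfolding n_def by linarith
  then have "z \<le> (x * B ^ k + 1) / B ^ k" unfolding z_def using Bk by (simp add: divide_right_mono)
  also have "\<dots> = x + 1 / B ^ k" using B1 by (simp add: add_divide_distrib)
  finally have "z \<le> x + 1 / B ^ k" .
  moreover have "1 / B ^ k < y - x"
  proof -
    have yx: "y - x > 0" using xy by simp
    have "1 < B ^ k * (y - x)" using k yx by (simp add: divide_less_eq)
    then show ?thesis using Bk by (simp add: divide_less_eq mult.commute)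
  qed
  ultimately have "z < y" by linarith
  then show ?thesis using zD xz by blast
qed

theorem theorem2p1:
  fixes b :: int and c u chat :: real and h l :: int
    and p1 p2 p3 p4 :: "int \<Rightarrow> int"
  assumes b: "b \<ge> 2"
    and c_root: "\<exists>j::nat. j \<ge> 1 \<and> c ^ j \<in> \<int>"
    and u: "u > 1"
    and h: "h \<ge> 1"
    and lp: "laurent_poly p1" "laurent_poly p2" "laurent_poly p3" "laurent_poly p4"
    and p1: "lp_eval p1 u = 1 / of_int b"
    and p2: "lp_eval p2 u = c"
    and p3_supp: "\<forall>k. (k < - h + 1 \<or> 0 < k) \<longrightarrow> p3 k = 0"
    and p3_0: "p3 0 = 1"
    and p3: "lp_eval p3 u = 0"
    and p4: "lp_eval p4 u = 0"
    and p4_dom: "p4 l > (\<Sum>k\<in>{k. p4 k \<noteq> 0} - {l}. \<bar>p4 k\<bar>)"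
    and chat: "chat > 3 * of_int \<bar>p4 l\<bar>"
    and algC: "algC_condition p3 h chat u \<bar>p4 l\<bar>"
  shows "Dyadic_ext b c \<subseteq> val_u u ` digit_words \<bar>p4 l\<bar> \<and>
         semiautomatic_ring_structure (digit_words \<bar>p4 l\<bar>) (val_u u) \<and>
         dense_in_reals (val_u u ` digit_words \<bar>p4 l\<bar>) \<and>
         semiautomatic_grid (digit_words \<bar>p4 l\<bar>) (val_u u)"
proof -
  define E where "E = \<bar>p4 l\<bar>"
  have u0: "u \<noteq> 0" using u by simp
  have pos: "p4 l > 0" using p4_dom by (metis (no_types, lifting) abs_ge_zero le_less_trans sum_nonneg)
  have El: "p4 l = E" unfolding E_def using pos by simp
  have fin4: "finite {k. p4 k \<noteq> 0}" using lp(4) unfolding laurent_poly_def .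
  have p4s: "(\<Sum>k\<in>{k. p4 k \<noteq> 0}. of_int (p4 k) * u powi k) = 0" using p4 unfolding lp_eval_def .
  have dom: "E > (\<Sum>k\<in>{k. p4 k \<noteq> 0} - {l}. \<bar>p4 k\<bar>)" using p4_dom El by simp
  have uE: "u + 1 < 3 * of_int E" by (rule u_bound[OF u fin4 p4s El dom])
  interpret cfg u chat h E p3
    by unfold_locales (use u h p3_supp p3_0 p3 algC in \<open>auto simp: E_def\<close>)
  have Sv: "val_u u ` digit_words E = Zs u"
  proof
    show "val_u u ` digit_words E \<subseteq> Zs u" using val_Zs by blast
    show "Zs u \<subseteq> val_u u ` digit_words E"
    proof
      fix x assume "x \<in> Zs u"
      then obtain cc K where K: "finite K" "\<forall>k. k \<notin> K \<longrightarrow> cc k = 0" "x = (\<Sum>k\<in>K. of_int (cc k) * u powi k)"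
        using Zs_rep[OF _ u0] by blast
      show "x \<in> val_u u ` digit_words E" unfolding K(3) by (rule normalize[OF u0 fin4 p4s El dom K(1,2)])
    qed
  qed
  have ring: "real_subring (Zs u)"
    unfolding real_subring_def using Zs_one Zs_neg Zs.add Zs_mult[OF u0] by blast
  have ib: "1 / of_int b \<in> Zs u" using lp_eval_Zs[of p1 u] p1 by simp
  have cZ: "c \<in> Zs u" using lp_eval_Zs[of p2 u] p2 by simp
  have DZ: "Dyadic b \<subseteq> Zs u" by (rule Dyadic_Zs[OF b u0 ib])
  have ext: "Dyadic_ext b c \<subseteq> Zs u"
    unfolding Dyadic_ext_def using ring DZ cZ by (intro Inter_lower) blast
  have dense: "dense_in_reals (Zs u)"
    unfolding dense_in_reals_def using Dyadic_dense[OF b] DZ by blast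
  have sr: "semiautomatic_ring_structure (digit_words E) (val_u u)"
    unfolding semiautomatic_ring_structure_def semiautomatic_binop_def
    using auto_add[OF uE] auto_less[OF uE] auto_eq[OF uE] auto_mul[OF uE] by blast
  show ?thesis unfolding E_def[symmetric] semiautomatic_grid_def Sv
    using ext sr dense ring by blast
qed

end
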